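(* Let $(X_t^f)_{t\ge0}$ be the Ornstein–Uhlenbeck process on $\mathbb{R}^d$, $dX_t^f=-X_t^f\,dt+\sqrt2\,dB_t$, with $X_0^f\sim q_0$ where $q_0$ is a probability density with $\mathsf{KL}(q_0\|q_\infty)<\infty$, $q_\infty$ the density of $\mathcal{N}(0,\mathbf{I}_d)$. Let $q_t$ be the density of $X_t^f$. For $0\le a\le b$ define $$H_a^b:=\int_a^b\int_{\mathbb{R}^d}q_u(x)\,\big\|\nabla\log q_u(x)-\nabla\log q_\infty(x)\big\|^2\,dx\,du=\int_a^b\int_{\mathbb{R}^d}q_u(x)\,\|\nabla\log q_u(x)+x\|^2\,dx\,du.$$ Then for all $0<t\le T$, $$H_t^T\le\frac{e^{-2t}}{1-e^{-2t}}\,H_0^t.$$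
   Context: $B_t$ is standard Brownian motion in $\mathbb{R}^d$, independent of $X_0^f$. Equivalently $X_t^f\overset{d}{=}e^{-t}X_0^f+\sqrt{1-e^{-2t}}\,Z$ with $Z\sim\mathcal{N}(0,\mathbf{I})$ independent of $X_0^f$. *)

theory Defs
  imports "HOL-Analysis.Analysis"
begin

definition gauss_dens :: "real \<Rightarrow> 'a::euclidean_space \<Rightarrow> real" where
  "gauss_dens s z = (2 * pi * s) powr (- real DIM('a) / 2) * exp (- (norm z)\<^sup>2 / (2 * s))"

definition q_inf :: "'a::euclidean_space \<Rightarrow> real" where
  "q_inf x = gauss_dens 1 x"

definition KL_finite :: "('a::euclidean_space \<Rightarrow> real) \<Rightarrow> ('a \<Rightarrow> real) \<Rightarrow> bool" where
  "KL_finite p r \<longleftrightarrow> integrable lborel (\<lambda>x. p x * ln (p x / r x))"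

text \<open>Density q_t of the OU process X_t = e^{-t} X_0 + sqrt(1 - e^{-2t}) Z,
X_0 having density q0: for t > 0 the convolution formula, q_0 = q0.\<close>
definition ou_dens :: "('a::euclidean_space \<Rightarrow> real) \<Rightarrow> real \<Rightarrow> 'a \<Rightarrow> real" where
  "ou_dens q0 t x = (if t = 0 then q0 x else
     (\<integral>y. q0 y * gauss_dens (1 - exp (-2 * t)) (x - exp (- t) *\<^sub>R y) \<partial>lborel))"

definition grad :: "('a::euclidean_space \<Rightarrow> real) \<Rightarrow> 'a \<Rightarrow> 'a" where
  "grad f x = (\<Sum>b\<in>Basis. frechet_derivative f (at x) b *\<^sub>R b)"

definition H :: "('a::euclidean_space \<Rightarrow> real) \<Rightarrow> real \<Rightarrow> real \<Rightarrow> ennreal" where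
  "H q0 a b = (\<integral>\<^sup>+ u \<in> {a..b}. (\<integral>\<^sup>+ x. ennreal (ou_dens q0 u x *
      (norm (grad (\<lambda>y. ln (ou_dens q0 u y)) x + x))\<^sup>2) \<partial>lborel) \<partial>lborel)"

end

theory Submission
  imports Defs "HOL-Probability.Probability"
begin


lemma gauss_dens_pos: "s > 0 \<Longrightarrow> gauss_dens s z > 0"
  by (simp add: gauss_dens_def)

lemma gauss_dens_prod:
  fixes y :: "'a::euclidean_space"
  assumes s: "s > 0"
  shows "gauss_dens s y = (\<Prod>b\<in>Basis. normal_density 0 (sqrt s) (y \<bullet> b))"
proof -
  have n2: "(norm y)\<^sup>2 = (\<Sum>b\<in>Basis. (y \<bullet> b)\<^sup>2)"
    unfolding power2_norm_eq_inner by (subst euclidean_inner) (simp add: power2_eq_square)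
  have "(\<Prod>b\<in>Basis. normal_density 0 (sqrt s) (y \<bullet> b))
      = (\<Prod>b\<in>Basis. (1 / sqrt (2 * pi * s)) * exp (- (y \<bullet> b)\<^sup>2 / (2 * s)))"
    using s by (intro prod.cong) (auto simp: normal_density_def)
  also have "\<dots> = (\<Prod>b\<in>(Basis::'a set). (1 / sqrt (2 * pi * s))) * (\<Prod>b\<in>Basis. exp (- (y \<bullet> b)\<^sup>2 / (2 * s)))"
    by (rule prod.distrib)
  also have "\<dots> = (1 / sqrt (2 * pi * s)) ^ DIM('a) * exp (\<Sum>b\<in>Basis. - (y \<bullet> b)\<^sup>2 / (2 * s))"
    by (simp only: prod_constant exp_sum[OF finite_Basis])
  also have "\<dots> = (1 / sqrt (2 * pi * s)) ^ DIM('a) * exp (- (norm y)\<^sup>2 / (2 * s))"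
    by (simp only: sum_divide_distrib[symmetric] sum_negf n2)
  also have "(1 / sqrt (2 * pi * s)) ^ DIM('a) = (2 * pi * s) powr (- real DIM('a) / 2)"
  proof -
    have p: "2 * pi * s > 0" using s by simp
    have a: "1 / sqrt (2 * pi * s) = (2 * pi * s) powr (- (1/2))"
      using p by (simp add: powr_minus_divide powr_half_sqrt)
    have "(1 / sqrt (2 * pi * s)) ^ DIM('a) = ((2 * pi * s) powr (- (1/2))) powr real DIM('a)"
      unfolding a by (rule powr_realpow[symmetric]) (use s in simp)
    also have "\<dots> = (2 * pi * s) powr (- real DIM('a) / 2)"
      by (simp add: powr_powr)
    finally show ?thesis .
  qed
  finally show ?thesis by (simp add: gauss_dens_def)
qed

lemma gauss_measurable[measurable]: "gauss_dens s \<in> borel_measurable borel"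
  unfolding gauss_dens_def by measurable

lemma nn_integral_gauss:
  assumes s: "s > 0"
  shows "(\<integral>\<^sup>+ y. ennreal (gauss_dens s (y::'a::euclidean_space)) \<partial>lborel) = 1"
proof -
  have "(\<integral>\<^sup>+ y. ennreal (gauss_dens s (y::'a)) \<partial>lborel)
      = (\<integral>\<^sup>+ y. (\<Prod>b\<in>Basis. ennreal (normal_density 0 (sqrt s) ((y::'a) \<bullet> b))) \<partial>lborel)"
    using s by (subst prod_ennreal) (auto simp: gauss_dens_prod)
  also have "\<dots> = (\<Prod>b\<in>(Basis::'a set). (\<integral>\<^sup>+ x. ennreal (normal_density 0 (sqrt s) x) \<partial>lborel))"
    by (rule nn_integral_lborel_prod) auto
  also have "\<dots> = 1"
  proof -
    have "(\<integral>\<^sup>+ x. ennreal (normal_density 0 (sqrt s) x) \<partial>lborel) = 1"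
      using s by (subst nn_integral_eq_integral) auto
    then show ?thesis by simp
  qed
  finally show ?thesis .
qed



lemma nn_integral_shift:
  fixes f :: "'a::euclidean_space \<Rightarrow> ennreal"
  assumes [measurable]: "f \<in> borel_measurable borel"
  shows "(\<integral>\<^sup>+ y. f (y + c) \<partial>lborel) = (\<integral>\<^sup>+ y. f y \<partial>lborel)"
proof -
  have "(\<integral>\<^sup>+ y. f y \<partial>lborel) = (\<integral>\<^sup>+ y. f y \<partial>(distr lborel borel ((+) c)))"
    by (simp add: lborel_distr_plus)
  also have "\<dots> = (\<integral>\<^sup>+ y. f (c + y) \<partial>lborel)"
    by (subst nn_integral_distr) auto
  finally show ?thesis by (simp add: add.commute)
qed

lemma integral_shift:
  fixes f :: "'a::euclidean_space \<Rightarrow> 'b::{banach, second_countable_topology}"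
  assumes [measurable]: "f \<in> borel_measurable borel"
  shows "(\<integral> y. f (y + c) \<partial>lborel) = (\<integral> y. f y \<partial>lborel)"
    and "integrable lborel (\<lambda>y. f (y + c)) \<longleftrightarrow> integrable lborel f"
proof -
  have "(\<integral> y. f y \<partial>lborel) = (\<integral> y. f y \<partial>(distr lborel borel ((+) c)))"
    by (simp add: lborel_distr_plus)
  also have "\<dots> = (\<integral> y. f (c + y) \<partial>lborel)"
    by (subst integral_distr) auto
  finally show "(\<integral> y. f (y + c) \<partial>lborel) = (\<integral> y. f y \<partial>lborel)" by (simp add: add.commute)
  have "integrable lborel f \<longleftrightarrow> integrable (distr lborel borel ((+) c)) f"
    by (simp add: lborel_distr_plus)
  also have "\<dots> \<longleftrightarrow> integrable lborel (\<lambda>y. f (c + y))"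
    by (subst integrable_distr_eq) auto
  finally show "integrable lborel (\<lambda>y. f (y + c)) \<longleftrightarrow> integrable lborel f" by (simp add: add.commute)
qed

lemma lborel_distr_uminus_eucl: "distr lborel borel uminus = (lborel :: 'a::euclidean_space measure)"
proof -
  have "(lborel :: 'a measure) = distr lborel borel (\<lambda>x. - x)"
    using lborel_affine[of "-1" "0::'a"] by (simp add: density_1)
  then show ?thesis by (simp add: fun_eq_iff)
qed

lemma integral_reflect:
  fixes f :: "'a::euclidean_space \<Rightarrow> 'b::{banach, second_countable_topology}"
  assumes [measurable]: "f \<in> borel_measurable borel"
  shows "(\<integral> y. f (- y) \<partial>lborel) = (\<integral> y. f y \<partial>lborel)"
proof -
  have "(\<integral> y. f y \<partial>lborel) = (\<integral> y. f y \<partial>(distr lborel borel uminus))"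
    by (simp add: lborel_distr_uminus_eucl)
  also have "\<dots> = (\<integral> y. f (- y) \<partial>lborel)"
    by (subst integral_distr) auto
  finally show ?thesis by simp
qed

definition gA :: "real \<Rightarrow> nat \<Rightarrow> real" where
  "gA s d = (2 * pi * s) powr (- real d / 2)"

lemma gauss_dens_alt: "gauss_dens s (z::'a::euclidean_space) = gA s DIM('a) * exp (- (norm z)\<^sup>2 / (2 * s))"
  by (simp add: gauss_dens_def gA_def)

lemma gA_pos: "s > 0 \<Longrightarrow> gA s d > 0"
  by (simp add: gA_def)

lemma gauss_le: "s > 0 \<Longrightarrow> gauss_dens s (z::'a::euclidean_space) \<le> gA s DIM('a)"
  unfolding gauss_dens_alt using gA_pos[of s "DIM('a)"]
  by (intro mult_left_le) (auto simp: field_simps)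

lemma r_exp_bound:
  fixes r s :: real assumes "s > 0" "r \<ge> 0"
  shows "r * exp (- r\<^sup>2 / (2 * s)) \<le> 1 + 2 * s"
proof -
  have "r \<le> 1 + r\<^sup>2" by (smt (verit) power2_eq_square mult_left_mono assms(2) mult_le_cancel_left1 not_sum_power2_lt_zero)
  also have "\<dots> \<le> (1 + 2 * s) * (1 + r\<^sup>2 / (2 * s))"
    using assms by (simp add: field_simps)
  also have "\<dots> \<le> (1 + 2 * s) * exp (r\<^sup>2 / (2 * s))"
    using assms by (intro mult_left_mono) (auto simp: exp_ge_add_one_self)
  finally have "r \<le> (1 + 2 * s) * exp (r\<^sup>2 / (2 * s))" .
  then show ?thesis by (simp add: exp_minus field_simps)
qed

lemma r2_exp_bound:
  fixes r s :: real assumes "s > 0"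
  shows "r\<^sup>2 * exp (- r\<^sup>2 / (2 * s)) \<le> 2 * s"
proof -
  have "r\<^sup>2 / (2 * s) \<le> exp (r\<^sup>2 / (2 * s))"
    by (smt (verit) exp_ge_add_one_self)
  then have "r\<^sup>2 \<le> 2 * s * exp (r\<^sup>2 / (2 * s))" using assms by (simp add: field_simps)
  then show ?thesis by (simp add: exp_minus field_simps)
qed

lemma norm_gauss_bound:
  assumes s: "s > 0"
  shows "norm z * gauss_dens s (z::'a::euclidean_space) \<le> gA s DIM('a) * (1 + 2 * s)"
  using r_exp_bound[OF s, of "norm z"] gA_pos[OF s, of "DIM('a)"]
  unfolding gauss_dens_alt by (simp add: mult.left_commute mult_left_mono)

lemma norm2_gauss_bound:
  assumes s: "s > 0"
  shows "(norm z)\<^sup>2 * gauss_dens s (z::'a::euclidean_space) \<le> gA s DIM('a) * (2 * s)"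
  using r2_exp_bound[OF s, of "norm z"] gA_pos[OF s, of "DIM('a)"]
  unfolding gauss_dens_alt by (simp add: mult.left_commute mult_left_mono)

lemma norm_gauss_le_gauss2:
  assumes s: "s > 0"
  shows "norm z * gauss_dens s (z::'a::euclidean_space)
     \<le> (gA s DIM('a) * (1 + 4 * s) / gA (2 * s) DIM('a)) * gauss_dens (2 * s) z"
proof -
  have e: "exp (- (norm z)\<^sup>2 / (2 * s)) = exp (- (norm z)\<^sup>2 / (2 * (2 * s))) * exp (- (norm z)\<^sup>2 / (2 * (2 * s)))"
    by (simp add: exp_add[symmetric] field_simps)
  have b: "norm z * exp (- (norm z)\<^sup>2 / (2 * (2 * s))) \<le> 1 + 2 * (2 * s)"
    using r_exp_bound[of "2 * s" "norm z"] s by simp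
  have "norm z * gauss_dens s z = gA s DIM('a) * (norm z * exp (- (norm z)\<^sup>2 / (2 * (2 * s)))) * exp (- (norm z)\<^sup>2 / (2 * (2 * s)))"
    unfolding gauss_dens_alt e by simp
  also have "\<dots> \<le> gA s DIM('a) * (1 + 4 * s) * exp (- (norm z)\<^sup>2 / (2 * (2 * s)))"
    using b gA_pos[OF s, of "DIM('a)"] by (intro mult_right_mono mult_left_mono) auto
  also have "\<dots> = (gA s DIM('a) * (1 + 4 * s) / gA (2 * s) DIM('a)) * gauss_dens (2 * s) z"
    unfolding gauss_dens_alt using gA_pos[of "2 * s" "DIM('a)"] s by simp
  finally show ?thesis .
qed

lemma integrable_gauss: "s > 0 \<Longrightarrow> integrable lborel (gauss_dens s :: 'a::euclidean_space \<Rightarrow> real)"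
  by (rule integrableI_nonneg) (auto simp: nn_integral_gauss less_imp_le[OF gauss_dens_pos] intro!: AE_I2)

lemma integral_gauss:
  assumes s: "s > 0" shows "(\<integral> y. gauss_dens s (y :: 'a::euclidean_space) \<partial>lborel) = 1"
proof -
  have "ennreal (\<integral> y. gauss_dens s (y :: 'a) \<partial>lborel) = 1"
    using nn_integral_gauss[OF s, where 'a='a]
    by (subst nn_integral_eq_integral[symmetric]) (auto intro!: AE_I2 integrable_gauss s less_imp_le[OF gauss_dens_pos[OF s]])
  then show ?thesis by simp
qed

lemma integrable_gauss_shift: "s > 0 \<Longrightarrow> integrable lborel (\<lambda>y. gauss_dens s (y - m :: 'a::euclidean_space))"
  using integral_shift(2)[of "gauss_dens s" "-m"] integrable_gauss[of s] by simp

lemma integral_gauss_shift: "s > 0 \<Longrightarrow> (\<integral> y. gauss_dens s (y - m :: 'a::euclidean_space) \<partial>lborel) = 1"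
  using integral_shift(1)[of "gauss_dens s" "-m"] integral_gauss[of s] by simp

lemma nn_integral_gauss_shift: "s > 0 \<Longrightarrow> (\<integral>\<^sup>+ y. ennreal (gauss_dens s (y - m :: 'a::euclidean_space)) \<partial>lborel) = 1"
  using nn_integral_shift[of "\<lambda>y. ennreal (gauss_dens s y)" "-m"] nn_integral_gauss[of s] by simp

lemma integrable_norm_gauss:
  assumes s: "s > 0"
  shows "integrable lborel (\<lambda>z. norm z * gauss_dens s (z :: 'a::euclidean_space))"
proof (rule Bochner_Integration.integrable_bound)
  show "integrable lborel (\<lambda>z. (gA s DIM('a) * (1 + 4 * s) / gA (2 * s) DIM('a)) * gauss_dens (2 * s) (z::'a))"
    by (intro integrable_mult_right integrable_gauss) (use s in simp)
  show "AE x in lborel. norm (norm x * gauss_dens s x) \<le>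
     norm ((gA s DIM('a) * (1 + 4 * s) / gA (2 * s) DIM('a)) * gauss_dens (2 * s) (x::'a))"
  proof (intro AE_I2)
    fix x :: 'a
    have "0 \<le> norm x * gauss_dens s x" using gauss_dens_pos[OF s, of x] by simp
    moreover have "0 \<le> (gA s DIM('a) * (1 + 4 * s) / gA (2 * s) DIM('a)) * gauss_dens (2 * s) x"
      using gauss_dens_pos[of "2 * s" x] gA_pos[of s "DIM('a)"] gA_pos[of "2 * s" "DIM('a)"] s by simp
    ultimately show "norm (norm x * gauss_dens s x) \<le> norm ((gA s DIM('a) * (1 + 4 * s) / gA (2 * s) DIM('a)) * gauss_dens (2 * s) x)"
      using norm_gauss_le_gauss2[OF s, of x] by (metis abs_of_nonneg real_norm_def)
  qed
qed measurable

lemma integrable_vec_gauss: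
  assumes s: "s > 0"
  shows "integrable lborel (\<lambda>z. gauss_dens s (z :: 'a::euclidean_space) *\<^sub>R z)"
  by (rule Bochner_Integration.integrable_bound[OF integrable_norm_gauss[OF s]]) (auto simp: abs_mult less_imp_le[OF gauss_dens_pos[OF s]])

lemma integral_vec_gauss:
  assumes s: "s > 0"
  shows "(\<integral> z. gauss_dens s (z :: 'a::euclidean_space) *\<^sub>R z \<partial>lborel) = 0"
proof -
  have "(\<integral> z. gauss_dens s (- z :: 'a) *\<^sub>R (- z) \<partial>lborel) = (\<integral> z. gauss_dens s (z :: 'a) *\<^sub>R z \<partial>lborel)"
    by (rule integral_reflect) measurable
  moreover have "gauss_dens s (- z) = gauss_dens s z" for z :: 'a by (simp add: gauss_dens_def)
  ultimately have "- (\<integral> z. gauss_dens s (z :: 'a) *\<^sub>R z \<partial>lborel) = (\<integral> z. gauss_dens s (z :: 'a) *\<^sub>R z \<partial>lborel)"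
    by simp
  then have "(\<integral> z. gauss_dens s (z :: 'a) *\<^sub>R z \<partial>lborel) + (\<integral> z. gauss_dens s (z :: 'a) *\<^sub>R z \<partial>lborel) = 0"
    by (metis add.right_inverse)
  then have "2 *\<^sub>R (\<integral> z. gauss_dens s (z :: 'a) *\<^sub>R z \<partial>lborel) = 0"
    by (simp add: scaleR_2)
  then show ?thesis by simp
qed

lemma integrable_vec_gauss_shift:
  assumes s: "s > 0"
  shows "integrable lborel (\<lambda>y. gauss_dens s (y - m :: 'a::euclidean_space) *\<^sub>R y)"
proof -
  have "integrable lborel (\<lambda>y. gauss_dens s (y - m :: 'a) *\<^sub>R (y - m) + gauss_dens s (y - m) *\<^sub>R m)"
    using integral_shift(2)[of "\<lambda>z. gauss_dens s z *\<^sub>R z" "-m"] integrable_vec_gauss[OF s]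
      integrable_gauss_shift[OF s, of m]
    by (intro Bochner_Integration.integrable_add) auto
  then show ?thesis by (simp add: algebra_simps)
qed

lemma integral_vec_gauss_shift:
  assumes s: "s > 0"
  shows "(\<integral> y. gauss_dens s (y - m :: 'a::euclidean_space) *\<^sub>R y \<partial>lborel) = m"
proof -
  have i1: "integrable lborel (\<lambda>y. gauss_dens s (y - m :: 'a) *\<^sub>R (y - m))"
    using integral_shift(2)[of "\<lambda>z. gauss_dens s z *\<^sub>R z" "-m"] integrable_vec_gauss[OF s] by simp
  have i2: "integrable lborel (\<lambda>y. gauss_dens s (y - m :: 'a) *\<^sub>R m)"
    using integrable_gauss_shift[OF s, of m] by simp
  have "(\<integral> y. gauss_dens s (y - m :: 'a) *\<^sub>R y \<partial>lborel)
     = (\<integral> y. gauss_dens s (y - m :: 'a) *\<^sub>R (y - m) + gauss_dens s (y - m) *\<^sub>R m \<partial>lborel)"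
    by (simp add: algebra_simps)
  also have "\<dots> = (\<integral> y. gauss_dens s (y - m :: 'a) *\<^sub>R (y - m) \<partial>lborel) + (\<integral> y. gauss_dens s (y - m) *\<^sub>R m \<partial>lborel)"
    using i1 i2 by (rule Bochner_Integration.integral_add)
  also have "(\<integral> y. gauss_dens s (y - m :: 'a) *\<^sub>R (y - m) \<partial>lborel) = 0"
    using integral_shift(1)[of "\<lambda>z. gauss_dens s z *\<^sub>R z" "-m"] integral_vec_gauss[OF s] by simp
  also have "(\<integral> y. gauss_dens s (y - m :: 'a) *\<^sub>R m \<partial>lborel) = m"
    using integral_gauss_shift[OF s, of m] integrable_gauss_shift[OF s, of m] by simp
  finally show ?thesis by simp
qed

lemma nn_integral_norm_gauss_shift:
  assumes s: "s > 0"
  shows "(\<integral>\<^sup>+ y. ennreal (gauss_dens s (y - m :: 'a::euclidean_space) * norm (y - m)) \<partial>lborel)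
     = ennreal (\<integral> z. norm z * gauss_dens s (z :: 'a) \<partial>lborel)"
proof -
  have "(\<integral>\<^sup>+ y. ennreal (gauss_dens s (y - m :: 'a) * norm (y - m)) \<partial>lborel)
      = (\<integral>\<^sup>+ z. ennreal (norm z * gauss_dens s (z :: 'a)) \<partial>lborel)"
    using nn_integral_shift[of "\<lambda>z. ennreal (norm z * gauss_dens s (z :: 'a))" "-m"] by (simp add: mult.commute)
  also have "\<dots> = ennreal (\<integral> z. norm z * gauss_dens s (z :: 'a) \<partial>lborel)"
    using integrable_norm_gauss[OF s] gauss_dens_pos[OF s]
    by (subst nn_integral_eq_integral) (auto intro!: AE_I2 simp: less_imp_le[OF gauss_dens_pos[OF s]])
  finally show ?thesis .
qed



lemma q_exp_bound:
  fixes Q s :: real assumes "s > 0" "Q \<ge> 0"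
  shows "Q * exp (- Q / (2 * s)) \<le> 2 * s"
  using r2_exp_bound[OF assms(1), of "sqrt Q"] assms by simp

lemma taylor1d:
  fixes a b c s :: real
  assumes s: "s > 0" and c: "c \<ge> 0" and cs: "b\<^sup>2 \<le> a * c" and a: "a \<ge> 0"
  defines "Q \<equiv> \<lambda>t. a + 2 * b * t + c * t\<^sup>2"
  shows "\<bar>exp (- Q 1 / (2 * s)) - exp (- Q 0 / (2 * s)) - (- exp (- Q 0 / (2 * s)) * b / s)\<bar> \<le> 3 * c / s"
proof -
  define \<phi> where "\<phi> t = exp (- Q t / (2 * s))" for t
  define \<phi>1 where "\<phi>1 t = - exp (- Q t / (2 * s)) * (b + c * t) / s" for t
  define \<phi>2 where "\<phi>2 t = exp (- Q t / (2 * s)) * ((b + c * t)\<^sup>2 / s\<^sup>2 - c / s)" for t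
  have d1: "DERIV \<phi> t :> \<phi>1 t" for t
    unfolding \<phi>_def \<phi>1_def Q_def
    using s by (auto intro!: derivative_eq_intros simp: field_simps power2_eq_square)
  have d2: "DERIV \<phi>1 t :> \<phi>2 t" for t
    unfolding \<phi>2_def \<phi>1_def Q_def
    using s by (auto intro!: derivative_eq_intros simp: field_simps power2_eq_square)
  have Qnn: "Q t \<ge> 0" for t
  proof -
    have "c * Q t = (b + c * t)\<^sup>2 + (a * c - b\<^sup>2)" unfolding Q_def by (simp add: algebra_simps power2_eq_square)
    then have "c * Q t \<ge> 0" using cs by simp
    show ?thesis
    proof (cases "c = 0")
      case True
      then have "b = 0" using cs by simp
      then show ?thesis using cs True a unfolding Q_def by (cases "a \<ge> 0") (auto simp: power2_eq_square)
    next
      case False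
      then show ?thesis using \<open>c * Q t \<ge> 0\<close> c by (simp add: zero_le_mult_iff)
    qed
  qed
  have bnd2: "\<bar>\<phi>2 t\<bar> \<le> 3 * c / s" for t
  proof -
    have cq: "(b + c * t)\<^sup>2 \<le> c * Q t"
    proof -
      have "c * Q t = (b + c * t)\<^sup>2 + (a * c - b\<^sup>2)" unfolding Q_def by (simp add: algebra_simps power2_eq_square)
      then show ?thesis using cs by simp
    qed
    have e: "0 < exp (- Q t / (2 * s))" by simp
    have e1: "exp (- Q t / (2 * s)) \<le> 1" using Qnn[of t] s by simp
    have "exp (- Q t / (2 * s)) * (b + c * t)\<^sup>2 \<le> exp (- Q t / (2 * s)) * (c * Q t)"
      using cq e by (intro mult_left_mono) auto
    also have "\<dots> = c * (Q t * exp (- Q t / (2 * s)))" by simp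
    also have "\<dots> \<le> c * (2 * s)" using q_exp_bound[OF s Qnn[of t]] c by (intro mult_left_mono) auto
    finally have A': "exp (- Q t / (2 * s)) * (b + c * t)\<^sup>2 \<le> c * (2 * s)" .
    have "exp (- Q t / (2 * s)) * (b + c * t)\<^sup>2 / s\<^sup>2 \<le> c * (2 * s) / s\<^sup>2"
      using A' by (rule divide_right_mono) simp
    also have "c * (2 * s) / s\<^sup>2 = 2 * c / s" using s by (simp add: power2_eq_square field_simps)
    finally have A: "exp (- Q t / (2 * s)) * (b + c * t)\<^sup>2 / s\<^sup>2 \<le> 2 * c / s" .
    have B: "exp (- Q t / (2 * s)) * (c / s) \<le> c / s" using e1 c s by (intro mult_left_le_one_le) auto
    have A0: "0 \<le> exp (- Q t / (2 * s)) * (b + c * t)\<^sup>2 / s\<^sup>2" by simp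
    have B0: "0 \<le> exp (- Q t / (2 * s)) * (c / s)" using c s by simp
    have "\<phi>2 t = exp (- Q t / (2 * s)) * (b + c * t)\<^sup>2 / s\<^sup>2 - exp (- Q t / (2 * s)) * (c / s)"
      unfolding \<phi>2_def by (simp add: algebra_simps)
    moreover have "3 * c / s = 2 * c / s + c / s" "c / s \<ge> 0" using s c by (auto simp: field_simps)
    ultimately show ?thesis using A B A0 B0 by (simp only: abs_le_iff) linarith
  qed
  obtain \<xi> where \<xi>: "0 < \<xi>" "\<xi> < 1" "\<phi> 1 - \<phi> 0 = (1 - 0) * \<phi>1 \<xi>"
    using MVT2[of 0 1 \<phi> \<phi>1] d1 by auto
  obtain \<eta> where \<eta>: "0 < \<eta>" "\<eta> < \<xi>" "\<phi>1 \<xi> - \<phi>1 0 = (\<xi> - 0) * \<phi>2 \<eta>"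
    using MVT2[of 0 \<xi> \<phi>1 \<phi>2] d2 \<xi>(1) by auto
  have "\<bar>\<phi> 1 - \<phi> 0 - \<phi>1 0\<bar> = \<xi> * \<bar>\<phi>2 \<eta>\<bar>" using \<xi> \<eta> by (simp add: abs_mult)
  also have "\<dots> \<le> 1 * (3 * c / s)" using \<xi> bnd2[of \<eta>] by (intro mult_mono) auto
  finally show ?thesis unfolding \<phi>_def \<phi>1_def by simp
qed



definition gradg :: "real \<Rightarrow> 'a::euclidean_space \<Rightarrow> 'a" where
  "gradg s z = - (gauss_dens s z / s) *\<^sub>R z"

lemma gauss_taylor:
  fixes z h :: "'a::euclidean_space"
  assumes s: "s > 0"
  shows "\<bar>gauss_dens s (z + h) - gauss_dens s z - gradg s z \<bullet> h\<bar> \<le> (3 * gA s DIM('a) / s) * (norm h)\<^sup>2"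
proof -
  define a where "a = z \<bullet> z"
  define b where "b = z \<bullet> h"
  define c where "c = h \<bullet> h"
  define Q where "Q = (\<lambda>t::real. a + 2 * b * t + c * t\<^sup>2)"
  have T: "\<bar>exp (- Q 1 / (2 * s)) - exp (- Q 0 / (2 * s)) - (- exp (- Q 0 / (2 * s)) * b / s)\<bar> \<le> 3 * c / s"
    unfolding Q_def
    by (rule taylor1d[OF s]) (auto simp: a_def b_def c_def Cauchy_Schwarz_ineq power2_eq_square[symmetric])
  have Q1: "Q 1 = (norm (z + h))\<^sup>2"
    unfolding Q_def a_def b_def c_def power2_norm_eq_inner by (simp add: inner_add_left inner_add_right inner_commute)
  have Q0: "Q 0 = (norm z)\<^sup>2"
    unfolding Q_def a_def by (simp add: power2_norm_eq_inner)
  have A: "gA s DIM('a) > 0" using gA_pos[OF s] .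
  have "gauss_dens s (z + h) - gauss_dens s z - gradg s z \<bullet> h
      = gA s DIM('a) * (exp (- Q 1 / (2 * s)) - exp (- Q 0 / (2 * s)) - (- exp (- Q 0 / (2 * s)) * b / s))"
    unfolding gradg_def gauss_dens_alt Q1 Q0 b_def by (simp add: algebra_simps)
  then have "\<bar>gauss_dens s (z + h) - gauss_dens s z - gradg s z \<bullet> h\<bar>
      = gA s DIM('a) * \<bar>exp (- Q 1 / (2 * s)) - exp (- Q 0 / (2 * s)) - (- exp (- Q 0 / (2 * s)) * b / s)\<bar>"
    using A by (simp add: abs_mult)
  also have "\<dots> \<le> gA s DIM('a) * (3 * c / s)"
    using T A by (intro mult_left_mono) auto
  also have "\<dots> = (3 * gA s DIM('a) / s) * (norm h)\<^sup>2"
    unfolding c_def power2_norm_eq_inner by simp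
  finally show ?thesis .
qed

lemma norm_gradg_bound:
  assumes s: "s > 0"
  shows "norm (gradg s (z::'a::euclidean_space)) \<le> gA s DIM('a) * (1 + 2 * s) / s"
proof -
  have "norm (gradg s z) = norm z * gauss_dens s z / s"
    unfolding gradg_def using gauss_dens_pos[OF s, of z] s by (simp add: abs_of_pos)
  also have "\<dots> \<le> gA s DIM('a) * (1 + 2 * s) / s"
    using norm_gauss_bound[OF s, of z] s by (simp add: divide_right_mono)
  finally show ?thesis .
qed

lemma gradg_measurable[measurable]: "gradg s \<in> borel_measurable borel"
  unfolding gradg_def by measurable

lemma integrable_bounded_scaleR:
  fixes q :: "'b::euclidean_space \<Rightarrow> real" and f :: "'b \<Rightarrow> 'c::euclidean_space"
  assumes q: "integrable lborel q" and f[measurable]: "f \<in> borel_measurable borel"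
    and B: "\<And>y. norm (f y) \<le> B"
  shows "integrable lborel (\<lambda>y. q y *\<^sub>R f y)"
proof (rule Bochner_Integration.integrable_bound)
  show "integrable lborel (\<lambda>y. B * norm (q y))" using q by auto
  show "(\<lambda>y. q y *\<^sub>R f y) \<in> borel_measurable lborel"
    using borel_measurable_integrable[OF q] by measurable
  show "AE y in lborel. norm (q y *\<^sub>R f y) \<le> norm (B * norm (q y))"
  proof (intro AE_I2)
    fix y
    have "0 \<le> B" using B[of y] norm_ge_zero order_trans by blast
    then show "norm (q y *\<^sub>R f y) \<le> norm (B * norm (q y))"
      using B[of y] by (simp add: abs_mult mult.commute[of B] mult_left_mono)
  qed
qed

lemma integrable_bounded_mult:
  fixes q :: "'b::euclidean_space \<Rightarrow> real" and f :: "'b \<Rightarrow> real"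
  assumes q: "integrable lborel q" and f[measurable]: "f \<in> borel_measurable borel"
    and B: "\<And>y. \<bar>f y\<bar> \<le> B"
  shows "integrable lborel (\<lambda>y. q y * f y)"
  using integrable_bounded_scaleR[OF q f, of B] B by simp

lemma has_derivative_conv:
  fixes q :: "'a::euclidean_space \<Rightarrow> real"
  assumes q: "integrable lborel q" and qnn: "\<And>y. q y \<ge> 0" and s: "s > 0"
  shows "((\<lambda>x. \<integral> y. q y * gauss_dens s (x - c *\<^sub>R y) \<partial>lborel) has_derivative
          (\<lambda>h. (\<integral> y. q y *\<^sub>R gradg s (x - c *\<^sub>R y) \<partial>lborel) \<bullet> h)) (at x)"
proof -
  have qm[measurable]: "q \<in> borel_measurable borel" using borel_measurable_integrable[OF q] by simp
  define K where "K = 3 * gA s DIM('a) / s"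
  define M where "M = (\<integral> y. q y \<partial>lborel)"
  have K0: "K > 0" unfolding K_def using gA_pos[OF s] s by simp
  have M0: "M \<ge> 0" unfolding M_def using qnn by simp
  have ig: "integrable lborel (\<lambda>y. q y * gauss_dens s (w - c *\<^sub>R y))" for w
    by (rule integrable_bounded_mult[OF q, of _ "gA s DIM('a)"]) (use gauss_le[OF s, where 'a='a] gauss_dens_pos[OF s, where 'a='a] in \<open>auto simp: abs_of_pos\<close>)
  have igr: "integrable lborel (\<lambda>y. q y *\<^sub>R gradg s (w - c *\<^sub>R y))" for w
    by (rule integrable_bounded_scaleR[OF q, of _ "gA s DIM('a) * (1 + 2 * s) / s"]) (use norm_gradg_bound[OF s] in auto)
  have key: "\<bar>(\<integral> y. q y * gauss_dens s (x + h - c *\<^sub>R y) \<partial>lborel) - (\<integral> y. q y * gauss_dens s (x - c *\<^sub>R y) \<partial>lborel)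
      - (\<integral> y. q y *\<^sub>R gradg s (x - c *\<^sub>R y) \<partial>lborel) \<bullet> h\<bar> \<le> K * M * (norm h)\<^sup>2" for h
  proof -
    have L: "(\<integral> y. q y *\<^sub>R gradg s (x - c *\<^sub>R y) \<partial>lborel) \<bullet> h = (\<integral> y. q y * (gradg s (x - c *\<^sub>R y) \<bullet> h) \<partial>lborel)"
      using igr[of x] by (subst integral_inner_left[symmetric]) auto
    have il: "integrable lborel (\<lambda>y. q y * (gradg s (x - c *\<^sub>R y) \<bullet> h))"
      using integrable_inner_left[OF igr[of x], of h] by simp
    have "(\<integral> y. q y * gauss_dens s (x + h - c *\<^sub>R y) \<partial>lborel) - (\<integral> y. q y * gauss_dens s (x - c *\<^sub>R y) \<partial>lborel)
      - (\<integral> y. q y *\<^sub>R gradg s (x - c *\<^sub>R y) \<partial>lborel) \<bullet> h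
      = (\<integral> y. q y * (gauss_dens s ((x - c *\<^sub>R y) + h) - gauss_dens s (x - c *\<^sub>R y) - gradg s (x - c *\<^sub>R y) \<bullet> h) \<partial>lborel)"
      unfolding L using ig[of "x + h"] ig[of x] il
      by (simp add: right_diff_distrib algebra_simps)
    also have "\<bar>\<dots>\<bar> \<le> (\<integral> y. q y * (K * (norm h)\<^sup>2) \<partial>lborel)"
    proof -
      have "\<bar>\<integral> y. q y * (gauss_dens s ((x - c *\<^sub>R y) + h) - gauss_dens s (x - c *\<^sub>R y) - gradg s (x - c *\<^sub>R y) \<bullet> h) \<partial>lborel\<bar>
          \<le> (\<integral> y. \<bar>q y * (gauss_dens s ((x - c *\<^sub>R y) + h) - gauss_dens s (x - c *\<^sub>R y) - gradg s (x - c *\<^sub>R y) \<bullet> h)\<bar> \<partial>lborel)"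
        by (rule integral_abs_bound)
      also have "\<dots> \<le> (\<integral> y. q y * (K * (norm h)\<^sup>2) \<partial>lborel)"
      proof (rule integral_mono)
        show "integrable lborel (\<lambda>y. q y * (K * (norm h)\<^sup>2))" using q by simp
        show "integrable lborel (\<lambda>y. \<bar>q y * (gauss_dens s ((x - c *\<^sub>R y) + h) - gauss_dens s (x - c *\<^sub>R y) - gradg s (x - c *\<^sub>R y) \<bullet> h)\<bar>)"
          using ig[of "x + h"] ig[of x] il
          by (intro integrable_abs) (simp add: right_diff_distrib algebra_simps)
        fix y
        show "\<bar>q y * (gauss_dens s ((x - c *\<^sub>R y) + h) - gauss_dens s (x - c *\<^sub>R y) - gradg s (x - c *\<^sub>R y) \<bullet> h)\<bar> \<le> q y * (K * (norm h)\<^sup>2)"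
        proof -
          have t: "\<bar>gauss_dens s ((x - c *\<^sub>R y) + h) - gauss_dens s (x - c *\<^sub>R y) - gradg s (x - c *\<^sub>R y) \<bullet> h\<bar> \<le> K * (norm h)\<^sup>2"
            using gauss_taylor[OF s, of "x - c *\<^sub>R y" h] unfolding K_def by simp
          show ?thesis unfolding abs_mult abs_of_nonneg[OF qnn[of y]]
            by (rule mult_left_mono[OF t qnn])
        qed
      qed
      finally show ?thesis .
    qed
    also have "\<dots> = K * M * (norm h)\<^sup>2" unfolding M_def by simp
    finally show ?thesis .
  qed
  show ?thesis
    unfolding has_derivative_at_alt
  proof (intro conjI allI impI)
    show "bounded_linear (\<lambda>h. (\<integral> y. q y *\<^sub>R gradg s (x - c *\<^sub>R y) \<partial>lborel) \<bullet> h)"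
      by (rule bounded_linear_inner_right)
    fix e :: real assume e: "e > 0"
    define d where "d = e / (K * M + 1)"
    have d0: "d > 0" unfolding d_def by (intro divide_pos_pos e add_nonneg_pos mult_nonneg_nonneg) (use K0 M0 in auto)
    show "\<exists>d>0. \<forall>y. norm (y - x) < d \<longrightarrow>
       norm ((\<integral> ya. q ya * gauss_dens s (y - c *\<^sub>R ya) \<partial>lborel) - (\<integral> y. q y * gauss_dens s (x - c *\<^sub>R y) \<partial>lborel) -
         (\<integral> y. q y *\<^sub>R gradg s (x - c *\<^sub>R y) \<partial>lborel) \<bullet> (y - x)) \<le> e * norm (y - x)"
    proof (intro exI[of _ d] conjI allI impI d0)
      fix y assume yd: "norm (y - x) < d"
      have "norm ((\<integral> ya. q ya * gauss_dens s (y - c *\<^sub>R ya) \<partial>lborel) - (\<integral> y. q y * gauss_dens s (x - c *\<^sub>R y) \<partial>lborel) -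
         (\<integral> y. q y *\<^sub>R gradg s (x - c *\<^sub>R y) \<partial>lborel) \<bullet> (y - x)) \<le> K * M * (norm (y - x))\<^sup>2"
        using key[of "y - x"] by simp
      also have "\<dots> = (K * M * norm (y - x)) * norm (y - x)" by (simp add: power2_eq_square)
      also have "\<dots> \<le> e * norm (y - x)"
      proof (rule mult_right_mono)
        have p: "0 \<le> K * M" using K0 M0 by simp
        have r: "K * M / (K * M + 1) \<le> 1" using p by (simp add: divide_le_eq_1)
        have "K * M * norm (y - x) \<le> K * M * d" using yd p by (intro mult_left_mono) auto
        also have "\<dots> = e * (K * M / (K * M + 1))" unfolding d_def by simp
        also have "\<dots> \<le> e * 1" using e r by (intro mult_left_mono) auto
        also have "\<dots> = e" by simp
        finally show "K * M * norm (y - x) \<le> e" .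
      qed simp
      finally show "norm ((\<integral> ya. q ya * gauss_dens s (y - c *\<^sub>R ya) \<partial>lborel) - (\<integral> y. q y * gauss_dens s (x - c *\<^sub>R y) \<partial>lborel) -
         (\<integral> y. q y *\<^sub>R gradg s (x - c *\<^sub>R y) \<partial>lborel) \<bullet> (y - x)) \<le> e * norm (y - x)" .
    qed
  qed
qed



locale ou_setup =
  fixes q0 :: "'a::euclidean_space \<Rightarrow> real"
  assumes q0m[measurable]: "q0 \<in> borel_measurable borel"
    and q0nn: "\<And>x. q0 x \<ge> 0"
    and q0int1: "(\<integral>\<^sup>+ x. ennreal (q0 x) \<partial>lborel) = 1"
begin

lemma q0_integrable: "integrable lborel q0"
  by (rule integrableI_nonneg) (auto simp: q0int1 q0nn)

lemma q0_integral: "(\<integral> x. q0 x \<partial>lborel) = 1"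
proof -
  have "ennreal (\<integral> x. q0 x \<partial>lborel) = 1"
    using q0int1 by (subst nn_integral_eq_integral[symmetric]) (auto simp: q0_integrable q0nn)
  then show ?thesis by simp
qed

definition sg :: "real \<Rightarrow> real" where "sg u = 1 - exp (-2 * u)"

lemma sg_pos: "u > 0 \<Longrightarrow> sg u > 0"
  by (simp add: sg_def)

abbreviation q :: "real \<Rightarrow> 'a \<Rightarrow> real" where "q \<equiv> ou_dens q0"

lemma q_def': "u > 0 \<Longrightarrow> q u x = (\<integral> y. q0 y * gauss_dens (sg u) (x - exp (- u) *\<^sub>R y) \<partial>lborel)"
  by (simp add: ou_dens_def sg_def)

definition V :: "real \<Rightarrow> 'a \<Rightarrow> 'a" where
  "V u x = (\<integral> y. q0 y *\<^sub>R gradg (sg u) (x - exp (- u) *\<^sub>R y) \<partial>lborel)"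

lemma integrable_q_kernel:
  assumes "s > 0"
  shows "integrable lborel (\<lambda>y. q0 y * gauss_dens s (w - c *\<^sub>R y))"
  by (rule integrable_bounded_mult[OF q0_integrable, of _ "gA s DIM('a)"])
     (use gauss_le[OF assms, where 'a='a] gauss_dens_pos[OF assms, where 'a='a] in \<open>auto simp: abs_of_pos\<close>)

lemma integrable_q_gradg:
  assumes "s > 0"
  shows "integrable lborel (\<lambda>y. q0 y *\<^sub>R gradg s (w - c *\<^sub>R y))"
  by (rule integrable_bounded_scaleR[OF q0_integrable, of _ "gA s DIM('a) * (1 + 2 * s) / s"])
     (use norm_gradg_bound[OF assms] in auto)

lemma q_pos:
  assumes u: "u > 0" shows "q u x > 0"
proof -
  have s: "sg u > 0" using sg_pos[OF u] .
  have nn: "0 \<le> (\<integral> y. q0 y * gauss_dens (sg u) (x - exp (- u) *\<^sub>R y) \<partial>lborel)"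
    by (intro integral_nonneg_AE AE_I2 mult_nonneg_nonneg q0nn less_imp_le[OF gauss_dens_pos[OF s]])
  have "(\<integral> y. q0 y * gauss_dens (sg u) (x - exp (- u) *\<^sub>R y) \<partial>lborel) \<noteq> 0"
  proof
    assume "(\<integral> y. q0 y * gauss_dens (sg u) (x - exp (- u) *\<^sub>R y) \<partial>lborel) = 0"
    then have "AE y in lborel. q0 y * gauss_dens (sg u) (x - exp (- u) *\<^sub>R y) = 0"
      using integrable_q_kernel[OF s]
      by (subst (asm) integral_nonneg_eq_0_iff_AE) (auto intro!: AE_I2 mult_nonneg_nonneg q0nn less_imp_le[OF gauss_dens_pos[OF s]])
    then have "AE y in lborel. q0 y = 0"
      by (rule AE_mp) (intro AE_I2 impI, use gauss_dens_pos[OF s] in \<open>metis less_irrefl mult_eq_0_iff\<close>)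
    then have "(\<integral> y. q0 y \<partial>lborel) = 0" by (simp add: integral_eq_zero_AE)
    then show False using q0_integral by simp
  qed
  then show ?thesis using nn q_def'[OF u] by simp
qed

lemma q_deriv:
  assumes u: "u > 0"
  shows "(q u has_derivative (\<lambda>h. V u x \<bullet> h)) (at x)"
proof -
  have "((\<lambda>x. \<integral> y. q0 y * gauss_dens (sg u) (x - exp (- u) *\<^sub>R y) \<partial>lborel) has_derivative (\<lambda>h. V u x \<bullet> h)) (at x)"
    unfolding V_def by (rule has_derivative_conv[OF q0_integrable q0nn sg_pos[OF u]])
  moreover have "q u = (\<lambda>x. \<integral> y. q0 y * gauss_dens (sg u) (x - exp (- u) *\<^sub>R y) \<partial>lborel)"
    using q_def'[OF u] by auto
  ultimately show ?thesis by simp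
qed

lemma grad_ln_q:
  assumes u: "u > 0"
  shows "grad (\<lambda>y. ln (q u y)) x = (1 / q u x) *\<^sub>R V u x"
proof -
  have d: "((\<lambda>y. ln (q u y)) has_derivative (\<lambda>h. (V u x \<bullet> h) * inverse (q u x))) (at x)"
    by (rule DERIV_compose_FDERIV[OF DERIV_ln[OF q_pos[OF u]] q_deriv[OF u]])
  have "frechet_derivative (\<lambda>y. ln (q u y)) (at x) = (\<lambda>h. (V u x \<bullet> h) * inverse (q u x))"
    using frechet_derivative_at[OF d] by simp
  then have "grad (\<lambda>y. ln (q u y)) x = (\<Sum>b\<in>Basis. ((V u x \<bullet> b) * inverse (q u x)) *\<^sub>R b)"
    unfolding grad_def by simp
  also have "\<dots> = (1 / q u x) *\<^sub>R (\<Sum>b\<in>Basis. (V u x \<bullet> b) *\<^sub>R b)"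
    by (simp add: scaleR_sum_right field_simps)
  also have "\<dots> = (1 / q u x) *\<^sub>R V u x" by (simp add: euclidean_representation)
  finally show ?thesis .
qed

definition R :: "real \<Rightarrow> 'a \<Rightarrow> 'a" where
  "R u x = V u x + q u x *\<^sub>R x"

lemma J_integrand:
  assumes u: "u > 0"
  shows "q u x * (norm (grad (\<lambda>y. ln (q u y)) x + x))\<^sup>2 = (norm (R u x))\<^sup>2 / q u x"
proof -
  have p: "q u x > 0" using q_pos[OF u] .
  have "grad (\<lambda>y. ln (q u y)) x + x = (1 / q u x) *\<^sub>R R u x"
    unfolding grad_ln_q[OF u] R_def using p by (simp add: scaleR_add_right)
  then show ?thesis using p by (simp add: power2_eq_square field_simps)
qed

definition kR :: "real \<Rightarrow> 'a \<Rightarrow> 'a \<Rightarrow> 'a" where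
  "kR u x y = q0 y *\<^sub>R (gauss_dens (sg u) (x - exp (- u) *\<^sub>R y) *\<^sub>R (x - (1 / sg u) *\<^sub>R (x - exp (- u) *\<^sub>R y)))"

lemma R_eq:
  assumes u: "u > 0"
  shows "R u x = (\<integral> y. kR u x y \<partial>lborel)"
proof -
  have s: "sg u > 0" using sg_pos[OF u] .
  have "R u x = (\<integral> y. q0 y *\<^sub>R gradg (sg u) (x - exp (- u) *\<^sub>R y) \<partial>lborel)
      + (\<integral> y. q0 y * gauss_dens (sg u) (x - exp (- u) *\<^sub>R y) \<partial>lborel) *\<^sub>R x"
    unfolding R_def V_def q_def'[OF u] ..
  also have "(\<integral> y. q0 y * gauss_dens (sg u) (x - exp (- u) *\<^sub>R y) \<partial>lborel) *\<^sub>R x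
      = (\<integral> y. (q0 y * gauss_dens (sg u) (x - exp (- u) *\<^sub>R y)) *\<^sub>R x \<partial>lborel)"
    using integrable_q_kernel[OF s] by simp
  also have "(\<integral> y. q0 y *\<^sub>R gradg (sg u) (x - exp (- u) *\<^sub>R y) \<partial>lborel)
      + (\<integral> y. (q0 y * gauss_dens (sg u) (x - exp (- u) *\<^sub>R y)) *\<^sub>R x \<partial>lborel)
      = (\<integral> y. q0 y *\<^sub>R gradg (sg u) (x - exp (- u) *\<^sub>R y) + (q0 y * gauss_dens (sg u) (x - exp (- u) *\<^sub>R y)) *\<^sub>R x \<partial>lborel)"
    using integrable_q_gradg[OF s] integrable_q_kernel[OF s]
    by (intro Bochner_Integration.integral_add[symmetric]) auto
  also have "\<dots> = (\<integral> y. kR u x y \<partial>lborel)"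
    unfolding kR_def gradg_def using s
    by (intro Bochner_Integration.integral_cong refl) (simp add: algebra_simps divide_inverse)
  finally show ?thesis .
qed

end



lemma alg_exponent:
  fixes su sr e W P M :: real
  assumes su: "su > 0" and sr: "sr > 0"
  defines "sv \<equiv> sr + e\<^sup>2 * su"
  defines "\<tau> \<equiv> su * sr / sv" and "\<kappa> \<equiv> e * su / sv"
  shows "- W / (2 * su) - (P - 2 * e * M + e\<^sup>2 * W) / (2 * sr)
       = - P / (2 * sv) - (W - 2 * \<kappa> * M + \<kappa>\<^sup>2 * P) / (2 * \<tau>)"
proof -
  have sv: "sv > 0" unfolding sv_def using su sr by (simp add: add_pos_nonneg)
  show ?thesis unfolding \<tau>_def \<kappa>_def using su sr sv
    by (simp add: field_simps power2_eq_square) (simp add: sv_def algebra_simps power2_eq_square)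
qed

lemma gA_mult:
  assumes "a > 0" "b > 0" "c > 0" "d > 0" "a * b = c * d"
  shows "gA a n * gA b n = gA c n * gA d n"
proof -
  have "gA a n * gA b n = ((2 * pi * a) * (2 * pi * b)) powr (- real n / 2)"
    unfolding gA_def using assms by (subst powr_mult) auto
  also have "(2 * pi * a) * (2 * pi * b) = (2 * pi * c) * (2 * pi * d)"
    using assms(5) by (simp add: algebra_simps)
  also have "((2 * pi * c) * (2 * pi * d)) powr (- real n / 2) = gA c n * gA d n"
    unfolding gA_def using assms by (subst powr_mult) auto
  finally show ?thesis .
qed

lemma gauss_prod:
  fixes a x y :: "'a::euclidean_space" and su sr e :: real
  assumes su: "su > 0" and sr: "sr > 0"
  defines "sv \<equiv> sr + e\<^sup>2 * su"
  defines "\<tau> \<equiv> su * sr / sv" and "\<kappa> \<equiv> e * su / sv"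
  shows "gauss_dens su (y - a) * gauss_dens sr (x - e *\<^sub>R y)
       = gauss_dens sv (x - e *\<^sub>R a) * gauss_dens \<tau> (y - (a + \<kappa> *\<^sub>R (x - e *\<^sub>R a)))"
proof -
  have sv: "sv > 0" unfolding sv_def using su sr by (simp add: add_pos_nonneg)
  have tau: "\<tau> > 0" unfolding \<tau>_def using su sr sv by simp
  define w where "w = y - a"
  define p where "p = x - e *\<^sub>R a"
  have y: "x - e *\<^sub>R y = p - e *\<^sub>R w" unfolding w_def p_def by (simp add: algebra_simps)
  have y2: "y - (a + \<kappa> *\<^sub>R (x - e *\<^sub>R a)) = w - \<kappa> *\<^sub>R p" unfolding w_def p_def by (simp add: algebra_simps)
  have n1: "(norm (p - e *\<^sub>R w))\<^sup>2 = p \<bullet> p - 2 * e * (w \<bullet> p) + e\<^sup>2 * (w \<bullet> w)"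
    unfolding power2_norm_eq_inner by (simp add: inner_diff_left inner_diff_right inner_commute power2_eq_square algebra_simps)
  have n2: "(norm (w - \<kappa> *\<^sub>R p))\<^sup>2 = w \<bullet> w - 2 * \<kappa> * (w \<bullet> p) + \<kappa>\<^sup>2 * (p \<bullet> p)"
    unfolding power2_norm_eq_inner by (simp add: inner_diff_left inner_diff_right inner_commute power2_eq_square algebra_simps)
  have ex: "- (norm w)\<^sup>2 / (2 * su) - (norm (p - e *\<^sub>R w))\<^sup>2 / (2 * sr)
     = - (norm p)\<^sup>2 / (2 * sv) - (norm (w - \<kappa> *\<^sub>R p))\<^sup>2 / (2 * \<tau>)"
    unfolding n1 n2 power2_norm_eq_inner[of w] power2_norm_eq_inner[of p]
    unfolding sv_def \<tau>_def \<kappa>_def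
    by (rule alg_exponent[OF su sr])
  have cst: "gA su DIM('a) * gA sr DIM('a) = gA sv DIM('a) * gA \<tau> DIM('a)"
    by (rule gA_mult[OF su sr sv tau]) (use sv in \<open>simp add: \<tau>_def\<close>)
  have "gauss_dens su (y - a) * gauss_dens sr (x - e *\<^sub>R y)
      = (gA su DIM('a) * gA sr DIM('a)) * exp (- (norm w)\<^sup>2 / (2 * su) - (norm (p - e *\<^sub>R w))\<^sup>2 / (2 * sr))"
    unfolding gauss_dens_alt y w_def[symmetric] by (simp add: exp_diff exp_minus field_simps)
  also have "\<dots> = (gA sv DIM('a) * gA \<tau> DIM('a)) * exp (- (norm p)\<^sup>2 / (2 * sv) - (norm (w - \<kappa> *\<^sub>R p))\<^sup>2 / (2 * \<tau>))"
    unfolding cst ex ..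
  also have "\<dots> = gauss_dens sv (x - e *\<^sub>R a) * gauss_dens \<tau> (y - (a + \<kappa> *\<^sub>R (x - e *\<^sub>R a)))"
    unfolding gauss_dens_alt y2 by (simp add: exp_diff exp_minus field_simps p_def)
  finally show ?thesis .
qed



context ou_setup begin

lemma sg_add: "sg (u + r) = sg r + (exp (- r))\<^sup>2 * sg u"
  unfolding sg_def by (simp add: power2_eq_square exp_add[symmetric] algebra_simps)

lemma sg_r: "sg r = 1 - (exp (- r))\<^sup>2"
  unfolding sg_def by (simp add: power2_eq_square exp_add[symmetric])

lemma q_nn_integral:
  assumes u: "u > 0"
  shows "ennreal (q u y) = (\<integral>\<^sup>+ z. ennreal (q0 z * gauss_dens (sg u) (y - exp (- u) *\<^sub>R z)) \<partial>lborel)"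
  unfolding q_def'[OF u]
  by (subst nn_integral_eq_integral) (auto intro!: AE_I2 integrable_q_kernel sg_pos u mult_nonneg_nonneg q0nn less_imp_le[OF gauss_dens_pos])

lemma inner_kernel:
  assumes u: "u > 0" and r: "r > 0"
  defines "e \<equiv> exp (- r)"
  defines "\<tau> \<equiv> sg u * sg r / sg (u + r)" and "\<kappa> \<equiv> e * sg u / sg (u + r)"
  shows "gauss_dens (sg u) (y - exp (- u) *\<^sub>R z) * gauss_dens (sg r) (x - e *\<^sub>R y)
       = gauss_dens (sg (u + r)) (x - exp (- (u + r)) *\<^sub>R z) * gauss_dens \<tau> (y - (exp (- u) *\<^sub>R z + \<kappa> *\<^sub>R (x - exp (- (u + r)) *\<^sub>R z)))"
proof -
  have ee: "e *\<^sub>R exp (- u) *\<^sub>R z = exp (- (u + r)) *\<^sub>R z"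
    unfolding e_def by (simp add: exp_add[symmetric] add.commute)
  have ee2: "exp (- r) * exp (- u) = exp (- u - r)" using exp_add[of "-u" "-r"] by (simp add: mult.commute)
  show ?thesis
    using gauss_prod[OF sg_pos[OF u] sg_pos[OF r], of y "exp (- u) *\<^sub>R z" x e]
    unfolding ee sg_add[symmetric] e_def \<tau>_def \<kappa>_def by (simp add: ee2)
qed

lemma tau_pos: "u > 0 \<Longrightarrow> r > 0 \<Longrightarrow> sg u * sg r / sg (u + r) > 0"
  using sg_pos[of u] sg_pos[of r] sg_pos[of "u + r"] by simp

lemma K1:
  assumes u: "u > 0" and r: "r > 0"
  shows "(\<integral>\<^sup>+ y. ennreal (q u y * gauss_dens (sg r) (x - exp (- r) *\<^sub>R y)) \<partial>lborel) = ennreal (q (u + r) x)"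
proof -
  define \<tau> where "\<tau> = sg u * sg r / sg (u + r)"
  define \<kappa> where "\<kappa> = exp (- r) * sg u / sg (u + r)"
  have tau: "\<tau> > 0" unfolding \<tau>_def using tau_pos[OF u r] .
  have "(\<integral>\<^sup>+ y. ennreal (q u y * gauss_dens (sg r) (x - exp (- r) *\<^sub>R y)) \<partial>lborel)
      = (\<integral>\<^sup>+ y. (\<integral>\<^sup>+ z. ennreal (q0 z * gauss_dens (sg u) (y - exp (- u) *\<^sub>R z)) \<partial>lborel) * ennreal (gauss_dens (sg r) (x - exp (- r) *\<^sub>R y)) \<partial>lborel)"
  proof (intro nn_integral_cong)
    fix y
    have "ennreal (q u y * gauss_dens (sg r) (x - exp (- r) *\<^sub>R y)) = ennreal (q u y) * ennreal (gauss_dens (sg r) (x - exp (- r) *\<^sub>R y))"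
      by (rule ennreal_mult) (use gauss_dens_pos[OF sg_pos[OF r]] q_pos[OF u] in \<open>auto intro: less_imp_le\<close>)
    then show "ennreal (q u y * gauss_dens (sg r) (x - exp (- r) *\<^sub>R y)) = (\<integral>\<^sup>+ z. ennreal (q0 z * gauss_dens (sg u) (y - exp (- u) *\<^sub>R z)) \<partial>lborel) * ennreal (gauss_dens (sg r) (x - exp (- r) *\<^sub>R y))"
      by (simp only: q_nn_integral[OF u])
  qed
  also have "\<dots> = (\<integral>\<^sup>+ y. (\<integral>\<^sup>+ z. ennreal (q0 z * gauss_dens (sg u) (y - exp (- u) *\<^sub>R z) * gauss_dens (sg r) (x - exp (- r) *\<^sub>R y)) \<partial>lborel) \<partial>lborel)"
    by (intro nn_integral_cong, subst nn_integral_multc[symmetric])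
       (auto intro!: nn_integral_cong simp: ennreal_mult[symmetric] q0nn less_imp_le[OF gauss_dens_pos[OF sg_pos[OF u]]] less_imp_le[OF gauss_dens_pos[OF sg_pos[OF r]]])
  also have "\<dots> = (\<integral>\<^sup>+ z. (\<integral>\<^sup>+ y. ennreal (q0 z * gauss_dens (sg u) (y - exp (- u) *\<^sub>R z) * gauss_dens (sg r) (x - exp (- r) *\<^sub>R y)) \<partial>lborel) \<partial>lborel)"
    by (rule lborel_pair.Fubini') measurable
  also have "\<dots> = (\<integral>\<^sup>+ z. ennreal (q0 z * gauss_dens (sg (u + r)) (x - exp (- (u + r)) *\<^sub>R z)) \<partial>lborel)"
  proof (intro nn_integral_cong)
    fix z
    have "(\<integral>\<^sup>+ y. ennreal (q0 z * gauss_dens (sg u) (y - exp (- u) *\<^sub>R z) * gauss_dens (sg r) (x - exp (- r) *\<^sub>R y)) \<partial>lborel)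
        = (\<integral>\<^sup>+ y. ennreal (q0 z * gauss_dens (sg (u + r)) (x - exp (- (u + r)) *\<^sub>R z)) * ennreal (gauss_dens \<tau> (y - (exp (- u) *\<^sub>R z + \<kappa> *\<^sub>R (x - exp (- (u + r)) *\<^sub>R z)))) \<partial>lborel)"
    proof (intro nn_integral_cong)
      fix y
      have eq: "q0 z * gauss_dens (sg u) (y - exp (- u) *\<^sub>R z) * gauss_dens (sg r) (x - exp (- r) *\<^sub>R y)
        = (q0 z * gauss_dens (sg (u + r)) (x - exp (- (u + r)) *\<^sub>R z)) * gauss_dens \<tau> (y - (exp (- u) *\<^sub>R z + \<kappa> *\<^sub>R (x - exp (- (u + r)) *\<^sub>R z)))"
        using inner_kernel[OF u r, of y z x] unfolding \<tau>_def \<kappa>_def by (simp add: mult.assoc)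
      show "ennreal (q0 z * gauss_dens (sg u) (y - exp (- u) *\<^sub>R z) * gauss_dens (sg r) (x - exp (- r) *\<^sub>R y))
        = ennreal (q0 z * gauss_dens (sg (u + r)) (x - exp (- (u + r)) *\<^sub>R z)) * ennreal (gauss_dens \<tau> (y - (exp (- u) *\<^sub>R z + \<kappa> *\<^sub>R (x - exp (- (u + r)) *\<^sub>R z))))"
        unfolding eq
        by (rule ennreal_mult) (use q0nn[of z] less_imp_le[OF gauss_dens_pos[OF sg_pos[of "u + r"]]] u r less_imp_le[OF gauss_dens_pos[OF tau]] in \<open>auto intro!: mult_nonneg_nonneg\<close>)
    qed
    also have "\<dots> = ennreal (q0 z * gauss_dens (sg (u + r)) (x - exp (- (u + r)) *\<^sub>R z)) * 1"
      by (subst nn_integral_cmult) (auto simp: nn_integral_gauss_shift[OF tau])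
    finally show "(\<integral>\<^sup>+ y. ennreal (q0 z * gauss_dens (sg u) (y - exp (- u) *\<^sub>R z) * gauss_dens (sg r) (x - exp (- r) *\<^sub>R y)) \<partial>lborel)
        = ennreal (q0 z * gauss_dens (sg (u + r)) (x - exp (- (u + r)) *\<^sub>R z))" by simp
  qed
  also have "\<dots> = ennreal (q (u + r) x)"
    using q_nn_integral[of "u + r" x] u r by simp
  finally show ?thesis .
qed

end



context ou_setup begin

lemma vec_identity:
  fixes x z :: 'a
  assumes u: "u > 0" and r: "r > 0"
  defines "e \<equiv> exp (- r)"
  defines "\<kappa> \<equiv> e * sg u / sg (u + r)"
  defines "a \<equiv> exp (- u) *\<^sub>R z" and "p \<equiv> x - exp (- (u + r)) *\<^sub>R z"
  shows "e *\<^sub>R ((1 - 1 / sg u) *\<^sub>R (a + \<kappa> *\<^sub>R p) + (1 / sg u) *\<^sub>R a) = x - (1 / sg (u + r)) *\<^sub>R p"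
proof -
  have su: "sg u > 0" using sg_pos[OF u] .
  have sv: "sg (u + r) > 0" using sg_pos u r by simp
  have ep: "e > 0" unfolding e_def by simp
  have pa: "p = x - e *\<^sub>R a" unfolding p_def a_def e_def by (simp add: exp_add[symmetric] add.commute)
  have svr: "sg (u + r) = (1 - e\<^sup>2) + e\<^sup>2 * sg u" unfolding e_def using sg_add[of u r] sg_r[of r] by simp
  have sv': "(1 - e\<^sup>2) + e\<^sup>2 * sg u > 0" using sv svr by simp
  have c1: "e * (1 - 1 / sg u) * \<kappa> = 1 - 1 / sg (u + r)"
  proof -
    have "e * (1 - 1 / sg u) * \<kappa> = e\<^sup>2 * (sg u - 1) / sg (u + r)"
      unfolding \<kappa>_def using su sv by (simp add: field_simps power2_eq_square)
    also have "e\<^sup>2 * (sg u - 1) = sg (u + r) - 1" unfolding svr by (simp add: algebra_simps)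
    also have "(sg (u + r) - 1) / sg (u + r) = 1 - 1 / sg (u + r)" using sv by (simp add: field_simps)
    finally show ?thesis .
  qed
  have k1: "1 - e * \<kappa> = (1 - e\<^sup>2) / sg (u + r)"
    unfolding \<kappa>_def using sv svr by (simp add: field_simps power2_eq_square)
  have c2: "e * (1 - 1 / sg u) * (1 - e * \<kappa>) + e / sg u = e / sg (u + r)"
  proof -
    have "e * (1 - 1 / sg u) * ((1 - e\<^sup>2) / sg (u + r)) + e / sg u = e * ((sg u - 1) * (1 - e\<^sup>2) + sg (u + r)) / (sg u * sg (u + r))"
      using su sv by (simp add: field_simps)
    also have "(sg u - 1) * (1 - e\<^sup>2) + sg (u + r) = sg u" unfolding svr by (simp add: algebra_simps)
    also have "e * sg u / (sg u * sg (u + r)) = e / sg (u + r)" using su by simp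
    finally show ?thesis unfolding k1 .
  qed
  have "e *\<^sub>R ((1 - 1 / sg u) *\<^sub>R (a + \<kappa> *\<^sub>R p) + (1 / sg u) *\<^sub>R a)
      = (e * (1 - 1 / sg u) * \<kappa>) *\<^sub>R x + (e * (1 - 1 / sg u) * (1 - e * \<kappa>) + e / sg u) *\<^sub>R a"
    unfolding pa by (simp add: algebra_simps)
  also have "\<dots> = (1 - 1 / sg (u + r)) *\<^sub>R x + (e / sg (u + r)) *\<^sub>R a"
    unfolding c1 c2 ..
  also have "\<dots> = x - (1 / sg (u + r)) *\<^sub>R p"
    unfolding pa by (simp add: algebra_simps)
  finally show ?thesis .
qed

lemma inner_vec:
  assumes u: "u > 0" and r: "r > 0"
  shows "(\<integral> y. gauss_dens (sg r) (x - exp (- r) *\<^sub>R y) *\<^sub>R kR u y z \<partial>lborel) = exp r *\<^sub>R kR (u + r) x z"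
proof -
  define e where "e = exp (- r)"
  define \<tau> where "\<tau> = sg u * sg r / sg (u + r)"
  define \<kappa> where "\<kappa> = e * sg u / sg (u + r)"
  define a where "a = exp (- u) *\<^sub>R z"
  define p where "p = x - exp (- (u + r)) *\<^sub>R z"
  define \<mu> where "\<mu> = a + \<kappa> *\<^sub>R p"
  define G where "G = gauss_dens (sg (u + r)) p"
  have tau: "\<tau> > 0" unfolding \<tau>_def using tau_pos[OF u r] .
  have su: "sg u > 0" using sg_pos[OF u] .
  have "(\<lambda>y. gauss_dens (sg r) (x - exp (- r) *\<^sub>R y) *\<^sub>R kR u y z)
     = (\<lambda>y. (q0 z * G) *\<^sub>R ((1 - 1 / sg u) *\<^sub>R (gauss_dens \<tau> (y - \<mu>) *\<^sub>R y) + (gauss_dens \<tau> (y - \<mu>) * (1 / sg u)) *\<^sub>R a))"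
  proof
    fix y
    have ik: "gauss_dens (sg u) (y - a) * gauss_dens (sg r) (x - exp (- r) *\<^sub>R y) = G * gauss_dens \<tau> (y - \<mu>)"
      using inner_kernel[OF u r, of y z x] unfolding G_def \<mu>_def a_def p_def \<tau>_def \<kappa>_def e_def by simp
    have "gauss_dens (sg r) (x - exp (- r) *\<^sub>R y) *\<^sub>R kR u y z
       = q0 z *\<^sub>R ((gauss_dens (sg u) (y - a) * gauss_dens (sg r) (x - exp (- r) *\<^sub>R y)) *\<^sub>R (y - (1 / sg u) *\<^sub>R (y - a)))"
      unfolding kR_def a_def by (simp add: algebra_simps)
    also have "\<dots> = (q0 z * G) *\<^sub>R ((1 - 1 / sg u) *\<^sub>R (gauss_dens \<tau> (y - \<mu>) *\<^sub>R y) + (gauss_dens \<tau> (y - \<mu>) * (1 / sg u)) *\<^sub>R a)"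
      unfolding ik by (simp add: algebra_simps)
    finally show "gauss_dens (sg r) (x - exp (- r) *\<^sub>R y) *\<^sub>R kR u y z
       = (q0 z * G) *\<^sub>R ((1 - 1 / sg u) *\<^sub>R (gauss_dens \<tau> (y - \<mu>) *\<^sub>R y) + (gauss_dens \<tau> (y - \<mu>) * (1 / sg u)) *\<^sub>R a)" .
  qed
  then have "(\<integral> y. gauss_dens (sg r) (x - exp (- r) *\<^sub>R y) *\<^sub>R kR u y z \<partial>lborel)
     = (q0 z * G) *\<^sub>R (\<integral> y. (1 - 1 / sg u) *\<^sub>R (gauss_dens \<tau> (y - \<mu>) *\<^sub>R y) + (gauss_dens \<tau> (y - \<mu>) * (1 / sg u)) *\<^sub>R a \<partial>lborel)"
    by simp
  also have "(\<integral> y. (1 - 1 / sg u) *\<^sub>R (gauss_dens \<tau> (y - \<mu>) *\<^sub>R y) + (gauss_dens \<tau> (y - \<mu>) * (1 / sg u)) *\<^sub>R a \<partial>lborel)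
     = (1 - 1 / sg u) *\<^sub>R (\<integral> y. gauss_dens \<tau> (y - \<mu>) *\<^sub>R y \<partial>lborel) + (\<integral> y. (gauss_dens \<tau> (y - \<mu>) * (1 / sg u)) *\<^sub>R a \<partial>lborel)"
  proof -
    have i1: "integrable lborel (\<lambda>y. (1 - 1 / sg u) *\<^sub>R (gauss_dens \<tau> (y - \<mu>) *\<^sub>R y))"
      using integrable_vec_gauss_shift[OF tau, of \<mu>] by (rule integrable_scaleR_right)
    have i2: "integrable lborel (\<lambda>y. (gauss_dens \<tau> (y - \<mu>) * (1 / sg u)) *\<^sub>R a)"
      using integrable_gauss_shift[OF tau, of \<mu>] by (intro integrable_scaleR_left integrable_mult_left)
    show ?thesis using i1 i2 by (simp only: Bochner_Integration.integral_add integral_scaleR_right)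
  qed
  also have "\<dots> = (1 - 1 / sg u) *\<^sub>R \<mu> + (1 / sg u) *\<^sub>R a"
    using integral_vec_gauss_shift[OF tau, of \<mu>] integral_gauss_shift[OF tau, of \<mu>] integrable_gauss_shift[OF tau, of \<mu>]
    by simp
  finally have "(\<integral> y. gauss_dens (sg r) (x - exp (- r) *\<^sub>R y) *\<^sub>R kR u y z \<partial>lborel)
     = (q0 z * G) *\<^sub>R ((1 - 1 / sg u) *\<^sub>R \<mu> + (1 / sg u) *\<^sub>R a)" .
  also have "(1 - 1 / sg u) *\<^sub>R \<mu> + (1 / sg u) *\<^sub>R a = exp r *\<^sub>R (x - (1 / sg (u + r)) *\<^sub>R p)"
  proof -
    have "e *\<^sub>R ((1 - 1 / sg u) *\<^sub>R \<mu> + (1 / sg u) *\<^sub>R a) = x - (1 / sg (u + r)) *\<^sub>R p"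
      unfolding \<mu>_def e_def \<kappa>_def a_def p_def by (rule vec_identity[OF u r])
    then have "exp r *\<^sub>R (e *\<^sub>R ((1 - 1 / sg u) *\<^sub>R \<mu> + (1 / sg u) *\<^sub>R a)) = exp r *\<^sub>R (x - (1 / sg (u + r)) *\<^sub>R p)"
      by simp
    then show ?thesis unfolding e_def by (simp add: exp_minus)
  qed
  also have "(q0 z * G) *\<^sub>R (exp r *\<^sub>R (x - (1 / sg (u + r)) *\<^sub>R p)) = exp r *\<^sub>R kR (u + r) x z"
    unfolding kR_def G_def p_def by (simp add: algebra_simps)
  finally show ?thesis .
qed

end



context ou_setup begin

lemma kR_measurable[measurable]: "(\<lambda>(y, z). kR u y z) \<in> borel_measurable (lborel \<Otimes>\<^sub>M lborel)"
  unfolding kR_def by measurable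

definition Cb :: "real \<Rightarrow> real \<Rightarrow> 'a \<Rightarrow> real" where
  "Cb u r x = gA (sg (u + r)) DIM('a) * \<bar>1 - 1 / sg u\<bar> * (\<integral> w. norm w * gauss_dens (sg u * sg r / sg (u + r)) (w::'a) \<partial>lborel)
      + exp r * (gA (sg (u + r)) DIM('a) * norm x + gA (sg (u + r)) DIM('a) * (1 + 2 * sg (u + r)) / sg (u + r))"

lemma inner_norm_bound:
  assumes u: "u > 0" and r: "r > 0"
  shows "(\<integral>\<^sup>+ y. ennreal (norm (gauss_dens (sg r) (x - exp (- r) *\<^sub>R y) *\<^sub>R kR u y z)) \<partial>lborel) \<le> ennreal (q0 z * Cb u r x)"
proof -
  define e where "e = exp (- r)"
  define \<tau> where "\<tau> = sg u * sg r / sg (u + r)"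
  define \<kappa> where "\<kappa> = e * sg u / sg (u + r)"
  define a where "a = exp (- u) *\<^sub>R z"
  define p where "p = x - exp (- (u + r)) *\<^sub>R z"
  define \<mu> where "\<mu> = a + \<kappa> *\<^sub>R p"
  define G where "G = gauss_dens (sg (u + r)) p"
  define m0 where "m0 = (1 - 1 / sg u) *\<^sub>R \<mu> + (1 / sg u) *\<^sub>R a"
  define c1 where "c1 = \<bar>1 - 1 / sg u\<bar>"
  define C\<tau> where "C\<tau> = (\<integral> w. norm w * gauss_dens \<tau> (w::'a) \<partial>lborel)"
  define Av where "Av = gA (sg (u + r)) DIM('a)"
  have tau: "\<tau> > 0" unfolding \<tau>_def using tau_pos[OF u r] .
  have su: "sg u > 0" using sg_pos[OF u] .
  have sv: "sg (u + r) > 0" using sg_pos u r by simp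
  have G0: "G > 0" unfolding G_def using gauss_dens_pos[OF sv] .
  have GA: "G \<le> Av" unfolding G_def Av_def by (rule gauss_le[OF sv])
  have Gp: "norm p * G \<le> Av * (1 + 2 * sg (u + r))" unfolding G_def Av_def by (rule norm_gauss_bound[OF sv])
  have m0: "m0 = exp r *\<^sub>R (x - (1 / sg (u + r)) *\<^sub>R p)"
  proof -
    have "e *\<^sub>R m0 = x - (1 / sg (u + r)) *\<^sub>R p"
      unfolding m0_def \<mu>_def e_def \<kappa>_def a_def p_def by (rule vec_identity[OF u r])
    then have "exp r *\<^sub>R (e *\<^sub>R m0) = exp r *\<^sub>R (x - (1 / sg (u + r)) *\<^sub>R p)" by simp
    then show ?thesis unfolding e_def by (simp add: exp_minus)
  qed
  have Gm0: "G * norm m0 \<le> exp r * (Av * norm x + Av * (1 + 2 * sg (u + r)) / sg (u + r))"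
  proof -
    have "norm m0 \<le> exp r * (norm x + norm p / sg (u + r))"
    proof -
      have "norm (x - (1 / sg (u + r)) *\<^sub>R p) \<le> norm x + norm ((1 / sg (u + r)) *\<^sub>R p)"
        by (rule norm_triangle_ineq4)
      also have "norm ((1 / sg (u + r)) *\<^sub>R p) = norm p / sg (u + r)" using sv by simp
      finally show ?thesis unfolding m0 by (simp add: mult_left_mono)
    qed
    then have "G * norm m0 \<le> G * (exp r * (norm x + norm p / sg (u + r)))"
      using G0 by (intro mult_left_mono) auto
    also have "\<dots> = exp r * (G * norm x + (norm p * G) / sg (u + r))" by (simp add: algebra_simps)
    also have "\<dots> \<le> exp r * (Av * norm x + Av * (1 + 2 * sg (u + r)) / sg (u + r))"
      using GA Gp sv by (intro mult_left_mono add_mono divide_right_mono mult_right_mono) auto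
    finally show ?thesis .
  qed
  have pt: "norm (gauss_dens (sg r) (x - exp (- r) *\<^sub>R y) *\<^sub>R kR u y z)
      \<le> q0 z * G * (c1 * (gauss_dens \<tau> (y - \<mu>) * norm (y - \<mu>)) + gauss_dens \<tau> (y - \<mu>) * norm m0)" for y
  proof -
    have ik: "gauss_dens (sg u) (y - a) * gauss_dens (sg r) (x - exp (- r) *\<^sub>R y) = G * gauss_dens \<tau> (y - \<mu>)"
      using inner_kernel[OF u r, of y z x] unfolding G_def \<mu>_def a_def p_def \<tau>_def \<kappa>_def e_def by simp
    have "gauss_dens (sg r) (x - exp (- r) *\<^sub>R y) *\<^sub>R kR u y z
       = q0 z *\<^sub>R ((gauss_dens (sg u) (y - a) * gauss_dens (sg r) (x - exp (- r) *\<^sub>R y)) *\<^sub>R (y - (1 / sg u) *\<^sub>R (y - a)))"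
      unfolding kR_def a_def by (simp add: algebra_simps)
    also have "\<dots> = (q0 z * G * gauss_dens \<tau> (y - \<mu>)) *\<^sub>R ((1 - 1 / sg u) *\<^sub>R (y - \<mu>) + m0)"
      unfolding ik m0_def by (simp add: algebra_simps)
    finally have eq: "gauss_dens (sg r) (x - exp (- r) *\<^sub>R y) *\<^sub>R kR u y z = (q0 z * G * gauss_dens \<tau> (y - \<mu>)) *\<^sub>R ((1 - 1 / sg u) *\<^sub>R (y - \<mu>) + m0)" .
    have nn: "0 \<le> q0 z * G * gauss_dens \<tau> (y - \<mu>)" using q0nn[of z] G0 gauss_dens_pos[OF tau, of "y - \<mu>"] by simp
    have "norm ((1 - 1 / sg u) *\<^sub>R (y - \<mu>) + m0) \<le> c1 * norm (y - \<mu>) + norm m0"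
      unfolding c1_def by (rule order_trans[OF norm_triangle_ineq]) simp
    then have "norm (gauss_dens (sg r) (x - exp (- r) *\<^sub>R y) *\<^sub>R kR u y z) \<le> (q0 z * G * gauss_dens \<tau> (y - \<mu>)) * (c1 * norm (y - \<mu>) + norm m0)"
      unfolding eq using nn by (simp add: mult_left_mono)
    then show ?thesis by (simp add: algebra_simps)
  qed
  have iF: "integrable lborel (\<lambda>y. q0 z * G * (c1 * (gauss_dens \<tau> (y - \<mu>) * norm (y - \<mu>)) + gauss_dens \<tau> (y - \<mu>) * norm m0))"
  proof -
    have "integrable lborel (\<lambda>y. gauss_dens \<tau> (y - \<mu>) * norm (y - \<mu>))"
      using integral_shift(2)[of "\<lambda>w. norm w * gauss_dens \<tau> w" "- \<mu>"] integrable_norm_gauss[OF tau] by (simp add: mult.commute)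
    then show ?thesis using integrable_gauss_shift[OF tau, of \<mu>] by auto
  qed
  have vF: "(\<integral> y. q0 z * G * (c1 * (gauss_dens \<tau> (y - \<mu>) * norm (y - \<mu>)) + gauss_dens \<tau> (y - \<mu>) * norm m0) \<partial>lborel)
      = q0 z * G * (c1 * C\<tau> + norm m0)"
  proof -
    have i1: "integrable lborel (\<lambda>y. gauss_dens \<tau> (y - \<mu>) * norm (y - \<mu>))"
      using integral_shift(2)[of "\<lambda>w. norm w * gauss_dens \<tau> w" "- \<mu>"] integrable_norm_gauss[OF tau] by (simp add: mult.commute)
    have v1: "(\<integral> y. gauss_dens \<tau> (y - \<mu>) * norm (y - \<mu>) \<partial>lborel) = C\<tau>"
      using integral_shift(1)[of "\<lambda>w. norm w * gauss_dens \<tau> w" "- \<mu>"] unfolding C\<tau>_def by (simp add: mult.commute)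
    have i2: "integrable lborel (\<lambda>y. gauss_dens \<tau> (y - \<mu>) * norm m0)"
      using integrable_gauss_shift[OF tau, of \<mu>] by auto
    show ?thesis using i1 i2 v1 integral_gauss_shift[OF tau, of \<mu>] by simp
  qed
  have "(\<integral>\<^sup>+ y. ennreal (norm (gauss_dens (sg r) (x - exp (- r) *\<^sub>R y) *\<^sub>R kR u y z)) \<partial>lborel)
      \<le> (\<integral>\<^sup>+ y. ennreal (q0 z * G * (c1 * (gauss_dens \<tau> (y - \<mu>) * norm (y - \<mu>)) + gauss_dens \<tau> (y - \<mu>) * norm m0)) \<partial>lborel)"
    by (intro nn_integral_mono ennreal_leI pt)
  also have "\<dots> = ennreal (q0 z * G * (c1 * C\<tau> + norm m0))"
    unfolding vF[symmetric]
    by (rule nn_integral_eq_integral[OF iF])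
       (auto intro!: AE_I2 mult_nonneg_nonneg add_nonneg_nonneg q0nn less_imp_le[OF G0] less_imp_le[OF gauss_dens_pos[OF tau]] simp: c1_def)
  also have "\<dots> \<le> ennreal (q0 z * Cb u r x)"
  proof (intro ennreal_leI mult_left_mono[OF _ q0nn])
    have Ct0: "C\<tau> \<ge> 0" unfolding C\<tau>_def by (intro integral_nonneg_AE AE_I2 mult_nonneg_nonneg norm_ge_zero less_imp_le[OF gauss_dens_pos[OF tau]])
    have "G * (c1 * C\<tau> + norm m0) = G * c1 * C\<tau> + G * norm m0" by (simp add: algebra_simps)
    also have "\<dots> \<le> Av * c1 * C\<tau> + exp r * (Av * norm x + Av * (1 + 2 * sg (u + r)) / sg (u + r))"
      using GA Gm0 Ct0 by (intro add_mono mult_right_mono) (auto simp: c1_def)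
    also have "\<dots> = Cb u r x" unfolding Cb_def Av_def c1_def C\<tau>_def \<tau>_def ..
    finally show "q0 z * G * (c1 * C\<tau> + norm m0) \<le> q0 z * Cb u r x" 
      using q0nn[of z] by (simp add: mult.assoc mult_left_mono)
  qed
  finally show ?thesis .
qed

end



context ou_setup begin

lemma prod_integrable:
  assumes u: "u > 0" and r: "r > 0"
  shows "integrable (lborel \<Otimes>\<^sub>M lborel) (\<lambda>(z, y). gauss_dens (sg r) (x - exp (- r) *\<^sub>R y) *\<^sub>R kR u y z)"
proof (subst integrable_iff_bounded, intro conjI)
  show m: "(\<lambda>(z, y). gauss_dens (sg r) (x - exp (- r) *\<^sub>R y) *\<^sub>R kR u y z) \<in> borel_measurable (lborel \<Otimes>\<^sub>M lborel)"
    unfolding kR_def by measurable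
  have "(\<integral>\<^sup>+ p. ennreal (norm ((\<lambda>(z, y). gauss_dens (sg r) (x - exp (- r) *\<^sub>R y) *\<^sub>R kR u y z) p)) \<partial>(lborel \<Otimes>\<^sub>M lborel))
      = (\<integral>\<^sup>+ z. (\<integral>\<^sup>+ y. ennreal (norm (gauss_dens (sg r) (x - exp (- r) *\<^sub>R y) *\<^sub>R kR u y z)) \<partial>lborel) \<partial>lborel)"
    by (subst lborel.nn_integral_fst[symmetric]) (use m in auto)
  also have "\<dots> \<le> (\<integral>\<^sup>+ z. ennreal (q0 z * Cb u r x) \<partial>lborel)"
    by (intro nn_integral_mono inner_norm_bound[OF u r])
  also have "\<dots> = (\<integral>\<^sup>+ z. ennreal (q0 z) * ennreal (Cb u r x) \<partial>lborel)"
  proof (intro nn_integral_cong)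
    fix z
    show "ennreal (q0 z * Cb u r x) = ennreal (q0 z) * ennreal (Cb u r x)"
    proof (cases "Cb u r x \<ge> 0")
      case True then show ?thesis using q0nn[of z] by (simp add: ennreal_mult)
    next
      case False then show ?thesis using q0nn[of z] by (simp add: mult_nonneg_nonpos ennreal_neg)
    qed
  qed
  also have "\<dots> = ennreal (Cb u r x)"
    by (subst nn_integral_multc) (auto simp: q0int1)
  also have "\<dots> < \<infinity>" by simp
  finally show "(\<integral>\<^sup>+ p. ennreal (norm ((\<lambda>(z, y). gauss_dens (sg r) (x - exp (- r) *\<^sub>R y) *\<^sub>R kR u y z) p)) \<partial>(lborel \<Otimes>\<^sub>M lborel)) < \<infinity>" .
qed

lemma K2:
  assumes u: "u > 0" and r: "r > 0"
  shows "(\<integral> y. gauss_dens (sg r) (x - exp (- r) *\<^sub>R y) *\<^sub>R R u y \<partial>lborel) = exp r *\<^sub>R R (u + r) x"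
proof -
  have "(\<integral> y. gauss_dens (sg r) (x - exp (- r) *\<^sub>R y) *\<^sub>R R u y \<partial>lborel)
      = (\<integral> y. (\<integral> z. gauss_dens (sg r) (x - exp (- r) *\<^sub>R y) *\<^sub>R kR u y z \<partial>lborel) \<partial>lborel)"
    unfolding R_eq[OF u] by simp
  also have "\<dots> = (\<integral> z. (\<integral> y. gauss_dens (sg r) (x - exp (- r) *\<^sub>R y) *\<^sub>R kR u y z \<partial>lborel) \<partial>lborel)"
    using lborel_pair.Fubini_integral[of "\<lambda>z y. gauss_dens (sg r) (x - exp (- r) *\<^sub>R y) *\<^sub>R kR u y z"]
      prod_integrable[OF u r, of x] by simp
  also have "\<dots> = (\<integral> z. exp r *\<^sub>R kR (u + r) x z \<partial>lborel)"
    using inner_vec[OF u r] by simp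
  also have "\<dots> = exp r *\<^sub>R R (u + r) x"
    using R_eq[of "u + r" x] u r by simp
  finally show ?thesis .
qed

end



lemma ennreal_integral_le_nn:
  fixes f :: "'b \<Rightarrow> real"
  assumes "\<And>x. f x \<ge> 0" "f \<in> borel_measurable M"
  shows "ennreal (\<integral> x. f x \<partial>M) \<le> (\<integral>\<^sup>+ x. ennreal (f x) \<partial>M)"
proof (cases "integrable M f")
  case True
  then show ?thesis using assms by (subst nn_integral_eq_integral) auto
next
  case False
  then show ?thesis by (simp add: not_integrable_integral_eq)
qed

context ou_setup begin

lemma q_meas[measurable]: "q u \<in> borel_measurable borel"
proof (cases "u = 0")
  case True then show ?thesis unfolding ou_dens_def by simp
next
  case False then show ?thesis unfolding ou_dens_def by simp
qed

lemma V_meas[measurable]: "V u \<in> borel_measurable borel"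
  unfolding V_def by measurable

lemma R_meas[measurable]: "R u \<in> borel_measurable borel"
  unfolding R_def by measurable

definition Jd :: "real \<Rightarrow> ennreal" where
  "Jd u = (\<integral>\<^sup>+ x. ennreal (q u x * (norm (grad (\<lambda>y. ln (q u y)) x + x))\<^sup>2) \<partial>lborel)"

lemma Jd_eq:
  assumes u: "u > 0"
  shows "Jd u = (\<integral>\<^sup>+ x. ennreal ((norm (R u x))\<^sup>2 / q u x) \<partial>lborel)"
  unfolding Jd_def J_integrand[OF u] ..

lemma pointwise_bound:
  assumes u: "u > 0" and r: "r > 0"
  shows "ennreal ((norm (R (u + r) x))\<^sup>2 / q (u + r) x)
     \<le> ennreal (exp (-2 * r)) * (\<integral>\<^sup>+ y. ennreal (gauss_dens (sg r) (x - exp (- r) *\<^sub>R y) * ((norm (R u y))\<^sup>2 / q u y)) \<partial>lborel)"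
proof -
  define W where "W y = gauss_dens (sg r) (x - exp (- r) *\<^sub>R y)" for y
  have W0: "W y \<ge> 0" for y unfolding W_def using gauss_dens_pos[OF sg_pos[OF r]] less_imp_le by blast
  have qu: "q u y > 0" for y using q_pos[OF u] .
  have qv: "q (u + r) x > 0" using q_pos u r by simp
  define I where "I = (\<integral> y. W y * norm (R u y) \<partial>lborel)"
  define N where "N = (\<integral>\<^sup>+ y. ennreal (W y * norm (R u y)) \<partial>lborel)"
  define T where "T = (\<integral>\<^sup>+ y. ennreal (W y * ((norm (R u y))\<^sup>2 / q u y)) \<partial>lborel)"
  have I0: "I \<ge> 0" unfolding I_def using W0 by (intro integral_nonneg_AE AE_I2) simp
  have Rv: "R (u + r) x = exp (- r) *\<^sub>R (\<integral> y. W y *\<^sub>R R u y \<partial>lborel)"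
    unfolding W_def K2[OF u r] by (simp add: exp_minus)
  have nRv: "norm (R (u + r) x) \<le> exp (- r) * I"
  proof -
    have "norm (\<integral> y. W y *\<^sub>R R u y \<partial>lborel) \<le> (\<integral> y. norm (W y *\<^sub>R R u y) \<partial>lborel)"
      by (rule integral_norm_bound)
    also have "\<dots> = I" unfolding I_def using W0 by (simp add: abs_of_nonneg)
    finally show ?thesis unfolding Rv by (simp add: mult_left_mono)
  qed
  have IN: "ennreal I \<le> N"
    unfolding I_def N_def W_def by (rule ennreal_integral_le_nn) (use W0[unfolded W_def] in auto)
  have CS: "N\<^sup>2 \<le> ennreal (q (u + r) x) * T"
  proof -
    define f where "f y = ennreal (sqrt (W y * q u y))" for y
    define g where "g y = ennreal (sqrt (W y) * norm (R u y) / sqrt (q u y))" for y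
    have fm: "f \<in> borel_measurable lborel" unfolding f_def W_def by measurable
    have gm: "g \<in> borel_measurable lborel" unfolding g_def W_def by measurable
    have fg: "f y * g y = ennreal (W y * norm (R u y))" for y
    proof -
      have "f y * g y = ennreal (sqrt (W y * q u y) * (sqrt (W y) * norm (R u y) / sqrt (q u y)))"
        unfolding f_def g_def using W0[of y] qu[of y] by (simp add: ennreal_mult[symmetric])
      also have "sqrt (W y * q u y) * (sqrt (W y) * norm (R u y) / sqrt (q u y)) = W y * norm (R u y)"
        using W0[of y] qu[of y] by (simp add: real_sqrt_mult field_simps)
      finally show ?thesis .
    qed
    have f2: "f y ^ 2 = ennreal (W y * q u y)" for y
    proof -
      have "f y ^ 2 = ennreal ((sqrt (W y * q u y)) ^ 2)" unfolding f_def using W0[of y] qu[of y] by (subst ennreal_power) auto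
      then show ?thesis using W0[of y] qu[of y] by simp
    qed
    have g2: "g y ^ 2 = ennreal (W y * ((norm (R u y))\<^sup>2 / q u y))" for y
    proof -
      have "g y ^ 2 = ennreal ((sqrt (W y) * norm (R u y) / sqrt (q u y)) ^ 2)"
        unfolding g_def using W0[of y] qu[of y] by (simp add: ennreal_power[symmetric])
      also have "(sqrt (W y) * norm (R u y) / sqrt (q u y)) ^ 2 = W y * ((norm (R u y))\<^sup>2 / q u y)"
        using W0[of y] qu[of y] by (simp add: power_divide power_mult_distrib)
      finally show ?thesis .
    qed
    have "N\<^sup>2 = (\<integral>\<^sup>+ y. f y * g y \<partial>lborel)\<^sup>2" unfolding N_def fg ..
    also have "\<dots> \<le> (\<integral>\<^sup>+ y. f y ^ 2 \<partial>lborel) * (\<integral>\<^sup>+ y. g y ^ 2 \<partial>lborel)"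
      by (rule Cauchy_Schwarz_nn_integral[OF fm gm])
    also have "(\<integral>\<^sup>+ y. f y ^ 2 \<partial>lborel) = ennreal (q (u + r) x)"
      unfolding f2 W_def using K1[OF u r, of x] by (simp add: mult.commute)
    also have "(\<integral>\<^sup>+ y. g y ^ 2 \<partial>lborel) = T" unfolding g2 T_def ..
    finally show ?thesis .
  qed
  have "ennreal ((norm (R (u + r) x))\<^sup>2) \<le> ennreal ((exp (- r) * I)\<^sup>2)"
    using nRv by (intro ennreal_leI power_mono) auto
  also have "\<dots> = ennreal (exp (-2 * r)) * (ennreal I)\<^sup>2"
  proof -
    have ee: "exp (- r) * exp (- r) = exp (-2 * r)" by (simp add: exp_add[symmetric])
    have "(exp (- r) * I)\<^sup>2 = exp (-2 * r) * I\<^sup>2" unfolding power2_eq_square ee[symmetric] by (simp add: algebra_simps)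
    then have "ennreal ((exp (- r) * I)\<^sup>2) = ennreal (exp (-2 * r)) * ennreal (I\<^sup>2)"
      by (simp add: ennreal_mult)
    also have "ennreal (I\<^sup>2) = (ennreal I)\<^sup>2" using I0 by (simp add: ennreal_power)
    finally show ?thesis .
  qed
  also have "\<dots> \<le> ennreal (exp (-2 * r)) * N\<^sup>2"
    using IN by (intro mult_left_mono power_mono) auto
  also have "\<dots> \<le> ennreal (exp (-2 * r)) * (ennreal (q (u + r) x) * T)"
    using CS by (intro mult_left_mono) auto
  finally have A: "ennreal ((norm (R (u + r) x))\<^sup>2) \<le> ennreal (exp (-2 * r)) * (ennreal (q (u + r) x) * T)" .
  have "ennreal ((norm (R (u + r) x))\<^sup>2 / q (u + r) x) = ennreal ((norm (R (u + r) x))\<^sup>2) * ennreal (1 / q (u + r) x)"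
    using qv by (simp add: ennreal_mult[symmetric])
  also have "\<dots> \<le> ennreal (exp (-2 * r)) * (ennreal (q (u + r) x) * T) * ennreal (1 / q (u + r) x)"
    using A by (intro mult_right_mono) auto
  also have "\<dots> = ennreal (exp (-2 * r)) * T * (ennreal (q (u + r) x) * ennreal (1 / q (u + r) x))"
    by (simp add: ac_simps)
  also have "ennreal (q (u + r) x) * ennreal (1 / q (u + r) x) = 1"
    using qv by (simp add: ennreal_mult[symmetric])
  finally show ?thesis unfolding T_def W_def by simp
qed

lemma Jd_decay:
  assumes u: "u > 0" and r: "r > 0"
  shows "Jd (u + r) \<le> ennreal (exp (-2 * r)) * Jd u"
proof -
  have "Jd (u + r) = (\<integral>\<^sup>+ x. ennreal ((norm (R (u + r) x))\<^sup>2 / q (u + r) x) \<partial>lborel)"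
    using Jd_eq[of "u + r"] u r by simp
  also have "\<dots> \<le> (\<integral>\<^sup>+ x. ennreal (exp (-2 * r)) * (\<integral>\<^sup>+ y. ennreal (gauss_dens (sg r) (x - exp (- r) *\<^sub>R y) * ((norm (R u y))\<^sup>2 / q u y)) \<partial>lborel) \<partial>lborel)"
    by (intro nn_integral_mono pointwise_bound[OF u r])
  also have "\<dots> = ennreal (exp (-2 * r)) * (\<integral>\<^sup>+ x. (\<integral>\<^sup>+ y. ennreal (gauss_dens (sg r) (x - exp (- r) *\<^sub>R y) * ((norm (R u y))\<^sup>2 / q u y)) \<partial>lborel) \<partial>lborel)"
    by (rule nn_integral_cmult) measurable
  also have "(\<integral>\<^sup>+ x. (\<integral>\<^sup>+ y. ennreal (gauss_dens (sg r) (x - exp (- r) *\<^sub>R y) * ((norm (R u y))\<^sup>2 / q u y)) \<partial>lborel) \<partial>lborel)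
      = (\<integral>\<^sup>+ y. (\<integral>\<^sup>+ x. ennreal (gauss_dens (sg r) (x - exp (- r) *\<^sub>R y) * ((norm (R u y))\<^sup>2 / q u y)) \<partial>lborel) \<partial>lborel)"
    by (rule lborel_pair.Fubini'[symmetric]) measurable
  also have "\<dots> = (\<integral>\<^sup>+ y. ennreal ((norm (R u y))\<^sup>2 / q u y) \<partial>lborel)"
  proof (intro nn_integral_cong)
    fix y
    have qu: "q u y > 0" using q_pos[OF u] .
    have "(\<integral>\<^sup>+ x. ennreal (gauss_dens (sg r) (x - exp (- r) *\<^sub>R y) * ((norm (R u y))\<^sup>2 / q u y)) \<partial>lborel)
        = (\<integral>\<^sup>+ x. ennreal (gauss_dens (sg r) (x - exp (- r) *\<^sub>R y)) * ennreal ((norm (R u y))\<^sup>2 / q u y) \<partial>lborel)"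
    proof (intro nn_integral_cong)
      fix x
      show "ennreal (gauss_dens (sg r) (x - exp (- r) *\<^sub>R y) * ((norm (R u y))\<^sup>2 / q u y))
        = ennreal (gauss_dens (sg r) (x - exp (- r) *\<^sub>R y)) * ennreal ((norm (R u y))\<^sup>2 / q u y)"
        by (rule ennreal_mult) (use qu less_imp_le[OF gauss_dens_pos[OF sg_pos[OF r]]] in auto)
    qed
    also have "\<dots> = (\<integral>\<^sup>+ x. ennreal (gauss_dens (sg r) (x - exp (- r) *\<^sub>R y)) \<partial>lborel) * ennreal ((norm (R u y))\<^sup>2 / q u y)"
      by (rule nn_integral_multc) measurable
    also have "\<dots> = ennreal ((norm (R u y))\<^sup>2 / q u y)"
      using nn_integral_gauss_shift[OF sg_pos[OF r], of "exp (- r) *\<^sub>R y"] by simp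
    finally show "(\<integral>\<^sup>+ x. ennreal (gauss_dens (sg r) (x - exp (- r) *\<^sub>R y) * ((norm (R u y))\<^sup>2 / q u y)) \<partial>lborel)
        = ennreal ((norm (R u y))\<^sup>2 / q u y)" .
  qed
  also have "\<dots> = Jd u" using Jd_eq[OF u] by simp
  finally show ?thesis .
qed

end



context ou_setup begin

lemma H_eq: "H q0 a b = (\<integral>\<^sup>+ u. Jd u * indicator {a..b} u \<partial>lborel)"
  unfolding H_def Jd_def ..

lemma main:
  assumes t: "0 < t" and tT: "t \<le> T"
  shows "H q0 t T \<le> ennreal (exp (-2 * t) / (1 - exp (-2 * t))) * H q0 0 t"
proof -
  define c where "c = Jd t"
  have up: "Jd u \<le> ennreal (exp (-2 * (u - t))) * c" if "u \<ge> t" for u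
  proof (cases "u = t")
    case True then show ?thesis unfolding c_def by simp
  next
    case False
    then have "u = t + (u - t)" "u - t > 0" using that by auto
    then show ?thesis unfolding c_def using Jd_decay[OF t, of "u - t"] by (simp add: mult.commute)
  qed
  have low: "ennreal (exp (2 * (t - u))) * c \<le> Jd u" if "0 < u" "u \<le> t" for u
  proof (cases "u = t")
    case True then show ?thesis unfolding c_def by simp
  next
    case False
    then have r: "t - u > 0" using that by auto
    have "c \<le> ennreal (exp (-2 * (t - u))) * Jd u"
      unfolding c_def using Jd_decay[OF that(1) r] by simp
    then have "ennreal (exp (2 * (t - u))) * c \<le> ennreal (exp (2 * (t - u))) * (ennreal (exp (-2 * (t - u))) * Jd u)"
      by (intro mult_left_mono) auto
    also have "\<dots> = ennreal (exp (2 * (t - u)) * exp (-2 * (t - u))) * Jd u"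
      by (simp add: ennreal_mult mult.assoc)
    also have "exp (2 * (t - u)) * exp (-2 * (t - u)) = 1" by (simp add: exp_add[symmetric])
    finally show ?thesis by simp
  qed
  have I1: "(\<integral>\<^sup>+ u. ennreal (exp (-2 * (u - t))) * indicator {t..T} u \<partial>lborel) = ennreal ((1 - exp (-2 * (T - t))) / 2)"
  proof -
    have "(\<integral>\<^sup>+ u. ennreal (exp (-2 * (u - t))) * indicator {t..T} u \<partial>lborel)
        = (- exp (-2 * (T - t)) / 2) - (- exp (-2 * (t - t)) / 2)"
      by (rule nn_integral_FTC_Icc[where F="\<lambda>u. - exp (-2 * (u - t)) / 2"])
         (auto intro!: derivative_eq_intros simp: tT)
    then show ?thesis by (simp add: diff_divide_distrib)
  qed
  have I2: "(\<integral>\<^sup>+ u. ennreal (exp (2 * (t - u))) * indicator {0..t} u \<partial>lborel) = ennreal ((exp (2 * t) - 1) / 2)"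
  proof -
    have "(\<integral>\<^sup>+ u. ennreal (exp (2 * (t - u))) * indicator {0..t} u \<partial>lborel)
        = (- exp (2 * (t - t)) / 2) - (- exp (2 * (t - 0)) / 2)"
      by (rule nn_integral_FTC_Icc[where F="\<lambda>u. - exp (2 * (t - u)) / 2"])
         (auto intro!: derivative_eq_intros simp: less_imp_le[OF t])
    then show ?thesis by (simp add: diff_divide_distrib)
  qed
  have "H q0 t T \<le> (\<integral>\<^sup>+ u. c * (ennreal (exp (-2 * (u - t))) * indicator {t..T} u) \<partial>lborel)"
    unfolding H_eq
  proof (intro nn_integral_mono)
    fix u
    show "Jd u * indicator {t..T} u \<le> c * (ennreal (exp (-2 * (u - t))) * indicator {t..T} u)"
    proof (cases "u \<in> {t..T}")
      case True then show ?thesis using up[of u] by (simp add: mult.commute)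
    qed simp
  qed
  also have "\<dots> = c * ennreal ((1 - exp (-2 * (T - t))) / 2)"
    unfolding I1[symmetric] by (rule nn_integral_cmult) measurable
  also have "\<dots> \<le> c * ennreal (1 / 2)"
    by (intro mult_left_mono ennreal_leI) auto
  finally have A: "H q0 t T \<le> c * ennreal (1 / 2)" .
  have "(\<integral>\<^sup>+ u. c * (ennreal (exp (2 * (t - u))) * indicator {0..t} u) \<partial>lborel) \<le> H q0 0 t"
    unfolding H_eq
  proof (intro nn_integral_mono_AE)
    show "AE u in lborel. c * (ennreal (exp (2 * (t - u))) * indicator {0..t} u) \<le> Jd u * indicator {0..t} u"
      using AE_lborel_singleton[of "0::real"]
    proof eventually_elim
      case (elim u)
      then show ?case using low[of u] by (auto split: split_indicator simp: mult.commute)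
    qed
  qed
  moreover have "(\<integral>\<^sup>+ u. c * (ennreal (exp (2 * (t - u))) * indicator {0..t} u) \<partial>lborel) = c * ennreal ((exp (2 * t) - 1) / 2)"
    unfolding I2[symmetric] by (rule nn_integral_cmult) measurable
  ultimately have B: "c * ennreal ((exp (2 * t) - 1) / 2) \<le> H q0 0 t" by simp
  have k: "exp (-2 * t) / (1 - exp (-2 * t)) * ((exp (2 * t) - 1) / 2) = 1 / 2"
  proof -
    have p: "1 - exp (-2 * t) > 0" using t by simp
    have "exp (-2 * t) * (exp (2 * t) - 1) = 1 - exp (-2 * t)"
      by (simp add: algebra_simps exp_add[symmetric])
    then show ?thesis using p by (simp add: field_simps)
  qed
  have "c * ennreal (1 / 2) = ennreal (exp (-2 * t) / (1 - exp (-2 * t))) * (c * ennreal ((exp (2 * t) - 1) / 2))"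
  proof -
    have nn1: "exp (-2 * t) / (1 - exp (-2 * t)) \<ge> 0" using t by simp
    have nn2: "(exp (2 * t) - 1) / 2 \<ge> 0" using t by simp
    have "ennreal (exp (-2 * t) / (1 - exp (-2 * t))) * ennreal ((exp (2 * t) - 1) / 2) = ennreal (1 / 2)"
      using k nn1 nn2 by (simp add: ennreal_mult[symmetric])
    then show ?thesis by (simp add: ac_simps)
  qed
  also have "\<dots> \<le> ennreal (exp (-2 * t) / (1 - exp (-2 * t))) * H q0 0 t"
    using B by (intro mult_left_mono) auto
  finally show ?thesis using A by simp
qed

end


theorem theorem1:
  fixes q0 :: "'a::euclidean_space \<Rightarrow> real" and t T :: real
  assumes "q0 \<in> borel_measurable lborel"
    and "\<And>x. q0 x \<ge> 0"
    and "(\<integral>\<^sup>+ x. ennreal (q0 x) \<partial>lborel) = 1"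
    and "KL_finite q0 q_inf"
    and "0 < t" and "t \<le> T"
  shows "H q0 t T \<le> ennreal (exp (-2 * t) / (1 - exp (-2 * t))) * H q0 0 t"
proof -
  interpret ou_setup q0
    by unfold_locales (use assms(1-3) in auto)
  show ?thesis by (rule main[OF assms(5,6)])
qed

end
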